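(* There is an isomorphism of categories $\widehat{\mathfrak{Sur}}_n\cong{}_{\mathbb Z}\mathfrak{Laby}_n$, which is the identity on objects and sends a correspondence $[Y\xleftarrow{\phi_\ast}U\xrightarrow{\phi^\ast}X]$ to the pure maze $X\to Y$ having, for each $x\in X$ and $y\in Y$, exactly $|(\phi^\ast,\phi_\ast)^{-1}(x,y)|$ passages from $x$ to $y$.
   Context: $\mathfrak{Sur}$ is the category of finite sets and surjections. $\widehat{\mathfrak{Sur}}$: objects finite sets (and their formal direct sums); $\widehat{\mathfrak{Sur}}(X,Y)$ is the free abelian group on isomorphism classes (over $X$ and $Y$) of correspondences $Y\xleftarrow{}U\xrightarrow{}X$ with both maps surjective; composition of $Z\leftarrow V\to Y$ with $Y\leftarrow U\to X$ is the sum over weak pull-backs, i.e. over all subsets $W\subseteq V\times_YU$ such that both projections $W\to V$ and $W\to U$ are surjective, of $Z\leftarrow W\to X$. $\widehat{\mathfrak{Sur}}_n$ is the quotient category in which every correspondence $Y\leftarrow U\to X$ with $|U|>n$ is set to $0$. Over the base ring $\mathbb Z$: a passage $p\colon x\to y$ carries a label $\overline p\in\mathbb Z$; a maze $P\colon X\to Y$ between finite sets is a finite multi-set of passages with every element of $X$ a source and every element of $Y$ a target; pure means all labels equal $1$. ${}_{\mathbb Z}\mathfrak{Laby}$: objects formal finite direct sums of finite sets; morphisms generated by mazes modulo $P\cup\{x\xrightarrow0y\}=0$ and $P\cup\{x\xrightarrow{a+b}y\}=P\cup\{x\xrightarrow ay\}+P\cup\{x\xrightarrow by\}+P\cup\{x\xrightarrow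 ay,x\xrightarrow by\}$; composition $P\circ Q=\sum_{U\sqsubseteq P\boxtimes Q}U$ ($U$ a sub-multi-set of composable pairs using every passage occurrence of $P$ and $Q$, read as the maze with passages $x\xrightarrow{\overline p\overline q}z$). ${}_{\mathbb Z}\mathfrak{Laby}_n$: quotient by $P=0$ if $|P|>n$ and $P=\sum_d\prod_p\binom{\overline p}{d_p}I_d$ ($d_p\ge1$ on passage occurrences; $I_d$ has $d_p$ label-$1$ passages from source to target of $p$). *)

theory Defs
  imports Main "HOL-Library.Poly_Mapping" "HOL-Library.Product_Lexorder"
begin

text \<open>The quotient of the free category by a set of relations R is the quotient by
  the smallest subgroup containing R and closed under composition on either
  side with arbitrary generators (i.e. the categorical ideal generated by R).\<close>

inductive_set gen_ideal ::
  "(('g \<Rightarrow>\<^sub>0 int) \<Rightarrow> ('g \<Rightarrow>\<^sub>0 int) \<Rightarrow> ('g \<Rightarrow>\<^sub>0 int)) \<Rightarrow> ('g \<Rightarrow>\<^sub>0 int) set \<Rightarrow> ('g \<Rightarrow>\<^sub>0 int) set"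
  for comp R where
  gen_base: "r \<in> R \<Longrightarrow> r \<in> gen_ideal comp R"
| gen_zero: "0 \<in> gen_ideal comp R"
| gen_diff: "a \<in> gen_ideal comp R \<Longrightarrow> b \<in> gen_ideal comp R \<Longrightarrow> a - b \<in> gen_ideal comp R"
| gen_left: "a \<in> gen_ideal comp R \<Longrightarrow> comp (frag_of g) a \<in> gen_ideal comp R"
| gen_right: "a \<in> gen_ideal comp R \<Longrightarrow> comp a (frag_of g) \<in> gen_ideal comp R"

text \<open>Bilinear extension of a composition defined on generators.
  bilin c a b = a o b (b is applied first).\<close>
definition bilin :: "('g \<Rightarrow> 'g \<Rightarrow> ('g \<Rightarrow>\<^sub>0 int)) \<Rightarrow> ('g \<Rightarrow>\<^sub>0 int) \<Rightarrow> ('g \<Rightarrow>\<^sub>0 int) \<Rightarrow> ('g \<Rightarrow>\<^sub>0 int)" where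
  "bilin c a b = frag_extend (\<lambda>p. frag_extend (\<lambda>q. c p q) b) a"

definition enum_set :: "'a set \<Rightarrow> 'a list" where
  "enum_set X = (SOME xs. distinct xs \<and> set xs = X)"

text \<open>A correspondence Y <-phi_* U -phi^*-> X is encoded as a list c of pairs:
  U = {..<length c}, phi^* i = fst (c!i) (in X), phi_* i = snd (c!i) (in Y).
  X and Y are the images, so both maps are surjective by construction.\<close>
type_synonym 'a corr = "('a \<times> 'a) list"

definition corr_src :: "'a corr \<Rightarrow> 'a set" where "corr_src c = fst ` set c"
definition corr_tgt :: "'a corr \<Rightarrow> 'a set" where "corr_tgt c = snd ` set c"

definition corr_iso :: "'a corr \<Rightarrow> 'a corr \<Rightarrow> bool" where
  "corr_iso c c' \<longleftrightarrow> length c = length c' \<and>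
     (\<exists>\<pi>. bij_betw \<pi> {..<length c} {..<length c'} \<and> (\<forall>i<length c. c' ! (\<pi> i) = c ! i))"

text \<open>Weak pull-backs: W subset of V x_Y U with both projections surjective.
  Here v : Y -> Z (Z <- V -> Y) and u : X -> Y (Y <- U -> X).\<close>
definition weak_pullbacks :: "'a corr \<Rightarrow> 'a corr \<Rightarrow> (nat \<times> nat) set set" where
  "weak_pullbacks v u = {W. W \<subseteq> {(i,j). i < length v \<and> j < length u \<and> fst (v!i) = snd (u!j)}
       \<and> fst ` W = {..<length v} \<and> snd ` W = {..<length u}}"

definition sur_comp_gen :: "'a corr \<Rightarrow> 'a corr \<Rightarrow> ('a corr \<Rightarrow>\<^sub>0 int)" where
  "sur_comp_gen v u = (\<Sum>W\<in>weak_pullbacks v u.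
      frag_of (map (\<lambda>(i,j). (fst (u!j), snd (v!i))) (sorted_list_of_set W)))"

definition sur_comp :: "('a corr \<Rightarrow>\<^sub>0 int) \<Rightarrow> ('a corr \<Rightarrow>\<^sub>0 int) \<Rightarrow> ('a corr \<Rightarrow>\<^sub>0 int)" where
  "sur_comp = bilin sur_comp_gen"

definition sur_id :: "'a set \<Rightarrow> ('a corr \<Rightarrow>\<^sub>0 int)" where
  "sur_id X = frag_of (map (\<lambda>x. (x, x)) (enum_set X))"

definition surHom :: "'a set \<Rightarrow> 'a set \<Rightarrow> ('a corr \<Rightarrow>\<^sub>0 int) set" where
  "surHom X Y = {a. \<forall>c\<in>Poly_Mapping.keys a. corr_src c = X \<and> corr_tgt c = Y}"

definition sur_rel :: "nat \<Rightarrow> ('a corr \<Rightarrow>\<^sub>0 int) set" where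
  "sur_rel n = {frag_of c - frag_of c' | c c'. corr_iso c c'} \<union> {frag_of c | c. length c > n}"

definition sur_ideal :: "nat \<Rightarrow> ('a corr \<Rightarrow>\<^sub>0 int) set" where
  "sur_ideal n = gen_ideal sur_comp (sur_rel n)"

text \<open>A maze is a finite multi-set of passages (source, label, target), encoded as a list
  (occurrences = list positions); lists with the same multiset are identified by a relation.\<close>
type_synonym 'a maze = "('a \<times> int \<times> 'a) list"

definition psrc :: "'a \<times> int \<times> 'a \<Rightarrow> 'a" where "psrc p = fst p"
definition plab :: "'a \<times> int \<times> 'a \<Rightarrow> int" where "plab p = fst (snd p)"
definition ptgt :: "'a \<times> int \<times> 'a \<Rightarrow> 'a" where "ptgt p = snd (snd p)"

definition maze_src :: "'a maze \<Rightarrow> 'a set" where "maze_src P = psrc ` set P"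
definition maze_tgt :: "'a maze \<Rightarrow> 'a set" where "maze_tgt P = ptgt ` set P"

definition maze_perm :: "'a maze \<Rightarrow> 'a maze \<Rightarrow> bool" where
  "maze_perm P P' \<longleftrightarrow> length P = length P' \<and>
     (\<exists>\<pi>. bij_betw \<pi> {..<length P} {..<length P'} \<and> (\<forall>i<length P. P' ! (\<pi> i) = P ! i))"

text \<open>Composition P o Q (Q : X -> Y first, then P : Y -> Z): sum over sub-multisets U of the
  composable pairs of occurrences using every occurrence of P and of Q.\<close>
definition maze_pairings :: "'a maze \<Rightarrow> 'a maze \<Rightarrow> (nat \<times> nat) set set" where
  "maze_pairings P Q = {U. U \<subseteq> {(i,j). i < length P \<and> j < length Q \<and> psrc (P!i) = ptgt (Q!j)}
       \<and> fst ` U = {..<length P} \<and> snd ` U = {..<length Q}}"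

definition laby_comp_gen :: "'a maze \<Rightarrow> 'a maze \<Rightarrow> ('a maze \<Rightarrow>\<^sub>0 int)" where
  "laby_comp_gen P Q = (\<Sum>U\<in>maze_pairings P Q.
      frag_of (map (\<lambda>(i,j). (psrc (Q!j), plab (P!i) * plab (Q!j), ptgt (P!i))) (sorted_list_of_set U)))"

definition laby_comp :: "('a maze \<Rightarrow>\<^sub>0 int) \<Rightarrow> ('a maze \<Rightarrow>\<^sub>0 int) \<Rightarrow> ('a maze \<Rightarrow>\<^sub>0 int)" where
  "laby_comp = bilin laby_comp_gen"

definition laby_id :: "'a set \<Rightarrow> ('a maze \<Rightarrow>\<^sub>0 int)" where
  "laby_id X = frag_of (map (\<lambda>x. (x, 1, x)) (enum_set X))"

definition labyHom :: "'a set \<Rightarrow> 'a set \<Rightarrow> ('a maze \<Rightarrow>\<^sub>0 int) set" where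
  "labyHom X Y = {b. \<forall>P\<in>Poly_Mapping.keys b. maze_src P = X \<and> maze_tgt P = Y}"

text \<open>Generalized binomial coefficient for integer top entry: a(a-1)...(a-k+1)/k!
  (the division is exact).\<close>
definition int_binom :: "int \<Rightarrow> nat \<Rightarrow> int" where
  "int_binom a k = (\<Prod>i<k. a - int i) div fact k"

definition maze_I :: "'a maze \<Rightarrow> nat list \<Rightarrow> 'a maze" where
  "maze_I P d = concat (map (\<lambda>(p, k). replicate k (psrc p, 1, ptgt p)) (zip P d))"

text \<open>Multiplicity vectors d with 1 <= d_p; entries > n give |I_d| > n, i.e. 0 in Laby_n,
  so the sum is restricted to d_p <= n (a finite range containing all nonzero terms).\<close>
definition mult_vectors :: "nat \<Rightarrow> 'a maze \<Rightarrow> nat list set" where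
  "mult_vectors n P = {d. length d = length P \<and> set d \<subseteq> {1..n}}"

definition laby_rel :: "nat \<Rightarrow> ('a maze \<Rightarrow>\<^sub>0 int) set" where
  "laby_rel n =
     {frag_of P - frag_of P' | P P'. maze_perm P P'}
   \<union> {frag_of (P @ [(x, 0, y)]) | P x y. True}
   \<union> {frag_of (P @ [(x, a + b, y)]) - frag_of (P @ [(x, a, y)]) - frag_of (P @ [(x, b, y)])
        - frag_of (P @ [(x, a, y), (x, b, y)]) | P x y a b. True}
   \<union> {frag_of P | P. length P > n}
   \<union> {frag_of P - (\<Sum>d\<in>mult_vectors n P.
          frag_cmul (\<Prod>i<length P. int_binom (plab (P!i)) (d!i)) (frag_of (maze_I P d))) | P. True}"

definition laby_ideal :: "nat \<Rightarrow> ('a maze \<Rightarrow>\<^sub>0 int) set" where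
  "laby_ideal n = gen_ideal laby_comp (laby_rel n)"

text \<open>A correspondence is sent to the pure maze with |(phi^*,phi_*)^{-1}(x,y)| passages x -> y:
  one label-1 passage (phi^* u, 1, phi_* u) for each u in U; extended Z-linearly.\<close>
definition corr_to_maze :: "'a corr \<Rightarrow> 'a maze" where
  "corr_to_maze c = map (\<lambda>(x, y). (x, 1, y)) c"

definition Phi :: "('a corr \<Rightarrow>\<^sub>0 int) \<Rightarrow> ('a maze \<Rightarrow>\<^sub>0 int)" where
  "Phi = frag_extend (\<lambda>c. frag_of (corr_to_maze c))"

end

theory Submission imports Defs "HOL-Combinatorics.List_Permutation" "HOL-Computational_Algebra.Formal_Power_Series" begin

lemma frag_cmul_of_int: "frag_cmul c x = of_int c * (x :: 'k::monoid_add \<Rightarrow>\<^sub>0 int)"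
proof -
  have e: "Poly_Mapping.single (0::'k) (of_int c :: int) = of_int c" by (rule single_of_int)
  have "of_int c * x = Poly_Mapping.single 0 c * x"
    using e by simp
  also have "\<dots> = Poly_Mapping.map ((*) c) x" by (simp add: mult_map_scale_conv_mult)
  finally show ?thesis
    by (intro poly_mapping_eqI) (simp add: Poly_Mapping.map.rep_eq when_def)
qed

lemma frag_of_mult: "frag_of (M::'b::monoid_add) * frag_of N = frag_of (M + N)"
  by (simp add: mult_single)

lemma frag_of_zero_one: "frag_of (0::'b::monoid_add) = 1"
  by simp

definition Dg :: "nat \<Rightarrow> ('b multiset \<Rightarrow>\<^sub>0 int) set" where
  "Dg k = {y. \<forall>M\<in>Poly_Mapping.keys y. k \<le> size M}"

lemma Dg_0 [simp]: "0 \<in> Dg k" by (simp add: Dg_def)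
lemma Dg_add: "x \<in> Dg k \<Longrightarrow> y \<in> Dg k \<Longrightarrow> x + y \<in> Dg k"
  using keys_add[of x y] by (auto simp: Dg_def)
lemma Dg_uminus: "x \<in> Dg k \<Longrightarrow> - x \<in> Dg k"
  by (auto simp: Dg_def in_keys_iff)
lemma Dg_diff: "x \<in> Dg k \<Longrightarrow> y \<in> Dg k \<Longrightarrow> x - y \<in> Dg k"
  using Dg_add[of x k "-y"] Dg_uminus[of y k] by simp
lemma Dg_sum: "(\<And>i. i \<in> I \<Longrightarrow> f i \<in> Dg k) \<Longrightarrow> sum f I \<in> Dg k"
  by (induction I rule: infinite_finite_induct) (auto intro: Dg_add)
lemma Dg_mult: "x \<in> Dg k \<Longrightarrow> y \<in> Dg l \<Longrightarrow> x * y \<in> Dg (k + l)"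
proof -
  assume "x \<in> Dg k" "y \<in> Dg l"
  then show ?thesis using keys_mult[of x y]
    unfolding Dg_def by (fastforce simp: size_union add_mono)
qed
lemma Dg_mono: "x \<in> Dg k \<Longrightarrow> l \<le> k \<Longrightarrow> x \<in> Dg l"
  by (auto simp: Dg_def)
lemma Dg_mult_left: "y \<in> Dg l \<Longrightarrow> x * y \<in> Dg l"
  using Dg_mult[of x 0 y l] by (simp add: Dg_def)
lemma Dg_mult_right: "x \<in> Dg l \<Longrightarrow> x * y \<in> Dg l"
  using Dg_mult[of x l y 0] by (simp add: Dg_def)
lemma Dg_cmul: "y \<in> Dg l \<Longrightarrow> frag_cmul c y \<in> Dg l"
  by (simp add: frag_cmul_of_int Dg_mult_left)
lemma Dg_power: "x \<in> Dg k \<Longrightarrow> x ^ m \<in> Dg (k * m)"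
proof (induction m)
  case 0 then show ?case by (simp add: Dg_def)
next
  case (Suc m) then show ?case using Dg_mult[of x k "x^m" "k*m"] by simp
qed
lemma Dg_prod: "finite I \<Longrightarrow> (\<And>i. i \<in> I \<Longrightarrow> f i \<in> Dg k) \<Longrightarrow> prod f I \<in> Dg (k * card I)"
proof (induction I rule: finite_induct)
  case empty then show ?case by (simp add: Dg_def)
next
  case (insert a I) then show ?case using Dg_mult[of "f a" k "prod f I" "k * card I"]
    by (simp add: algebra_simps)
qed
lemma Dg_frag_of: "k \<le> size M \<Longrightarrow> frag_of M \<in> Dg k"
  by (simp add: Dg_def)

definition Zs :: "nat \<Rightarrow> ('b multiset \<Rightarrow>\<^sub>0 int) set" where "Zs n = Dg (Suc n)"

definition eqv :: "nat \<Rightarrow> ('b multiset \<Rightarrow>\<^sub>0 int) \<Rightarrow> ('b multiset \<Rightarrow>\<^sub>0 int) \<Rightarrow> bool" where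
  "eqv n x y \<longleftrightarrow> x - y \<in> Zs n"

lemma eqv_refl [simp]: "eqv n x x" by (simp add: eqv_def Zs_def)
lemma eqv_sym: "eqv n x y \<Longrightarrow> eqv n y x"
  unfolding eqv_def Zs_def by (metis Dg_uminus minus_diff_eq)
lemma eqv_trans: "eqv n x y \<Longrightarrow> eqv n y z \<Longrightarrow> eqv n x z"
  unfolding eqv_def Zs_def using Dg_add by fastforce
lemma eqv_add: "eqv n x y \<Longrightarrow> eqv n x' y' \<Longrightarrow> eqv n (x + x') (y + y')"
  unfolding eqv_def Zs_def using Dg_add by (fastforce simp: algebra_simps)
lemma eqv_diff: "eqv n x y \<Longrightarrow> eqv n x' y' \<Longrightarrow> eqv n (x - x') (y - y')"
  unfolding eqv_def Zs_def using Dg_diff by (fastforce simp: algebra_simps)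
lemma eqv_uminus: "eqv n x y \<Longrightarrow> eqv n (- x) (- y)"
  unfolding eqv_def Zs_def using Dg_uminus by (fastforce simp: algebra_simps)
lemma eqv_mult: "eqv n x y \<Longrightarrow> eqv n x' y' \<Longrightarrow> eqv n (x * x') (y * y')"
proof -
  assume a: "eqv n x y" "eqv n x' y'"
  have "x * x' - y * y' = (x - y) * x' + y * (x' - y')" by (simp add: algebra_simps)
  then show ?thesis using a unfolding eqv_def Zs_def
    by (metis Dg_add Dg_mult_left Dg_mult_right)
qed
lemma eqv_sum: "(\<And>i. i \<in> I \<Longrightarrow> eqv n (f i) (g i)) \<Longrightarrow> eqv n (sum f I) (sum g I)"
  by (induction I rule: infinite_finite_induct) (auto intro: eqv_add)
lemma eqv_prod: "(\<And>i. i \<in> I \<Longrightarrow> eqv n (f i) (g i)) \<Longrightarrow> eqv n (prod f I) (prod g I)"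
  by (induction I rule: infinite_finite_induct) (auto intro: eqv_mult)
lemma eqv_power: "eqv n x y \<Longrightarrow> eqv n (x ^ k) (y ^ k)"
  by (induction k) (auto intro: eqv_mult)
lemma eqv_cmul: "eqv n x y \<Longrightarrow> eqv n (frag_cmul c x) (frag_cmul c y)"
  by (simp add: frag_cmul_of_int eqv_mult)
lemma eqv_Zs: "x \<in> Zs n \<Longrightarrow> eqv n x 0" by (simp add: eqv_def)
lemma eqv_Zs_iff: "eqv n x 0 \<longleftrightarrow> x \<in> Zs n" by (simp add: eqv_def)

lemma ib_rat: "rat_of_int (int_binom a k) = (rat_of_int a) gchoose k"
proof -
  have "\<exists>c. (rat_of_int a) gchoose k = rat_of_int c"
  proof (cases "a \<ge> 0")
    case True
    then obtain m where "a = int m" by (metis nonneg_eq_int)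
    then show ?thesis using binomial_gbinomial[of m k, where 'a=rat]
      by (metis of_int_of_nat_eq)
  next
    case False
    then have "int k - a - 1 \<ge> 0" by simp
    then obtain m where "int k - a - 1 = int m" by (metis nonneg_eq_int)
    then have m: "of_nat k - rat_of_int a - 1 = of_nat m"
      by (metis of_int_1 of_int_diff of_int_of_nat_eq)
    show ?thesis using gbinomial_negated_upper[of "rat_of_int a" k] m binomial_gbinomial[of m k, where 'a=rat]
      by (metis of_int_minus of_int_of_nat_eq of_int_1 of_int_mult of_int_power)
  qed
  then obtain c where c: "(rat_of_int a) gchoose k = rat_of_int c" by blast
  have "fact k * rat_of_int c = (\<Prod>i = 0..<k. rat_of_int a - of_nat i)"
    using gbinomial_mult_fact[of k "rat_of_int a"] c by simp
  then have "rat_of_int (fact k * c) = rat_of_int (\<Prod>i<k. a - int i)" by (simp add: atLeast0LessThan)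
  then have e: "fact k * c = (\<Prod>i<k. a - int i)" using of_int_eq_iff by blast
  have "int_binom a k = c" unfolding int_binom_def e[symmetric] by simp
  then show ?thesis using c by simp
qed

lemma ib_eq_iff: "int_binom a k = int_binom b l \<longleftrightarrow> (rat_of_int a) gchoose k = (rat_of_int b) gchoose l"
  by (metis ib_rat of_int_eq_iff)

lemma ib_0 [simp]: "int_binom a 0 = 1"
  by (simp add: int_binom_def)
lemma ib_zero_Suc [simp]: "int_binom 0 (Suc k) = 0"
  using ib_rat[of 0 "Suc k"] by simp
lemma ib_zero: "k \<ge> 1 \<Longrightarrow> int_binom 0 k = 0"
  by (cases k) auto
lemma ib_nat: "int_binom (int m) k = int (m choose k)"
  using ib_rat[of "int m" k] binomial_gbinomial[of m k, where 'a=rat]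
  by (metis of_int_eq_iff of_int_of_nat_eq)
lemma ib_one: "int_binom 1 k = (if k \<le> 1 then 1 else 0)"
  using ib_nat[of 1 k] by (cases k) (auto simp: binomial_eq_0)
lemma ib_pascal: "int_binom (a + 1) (Suc k) = int_binom a k + int_binom a (Suc k)"
  using ib_rat[of "a+1" "Suc k"] ib_rat[of a k] ib_rat[of a "Suc k"] gbinomial_Suc_Suc[of "rat_of_int a" k]
  by (metis of_int_add of_int_eq_iff of_int_1)
lemma ib_vandermonde: "int_binom (a + b) k = (\<Sum>i\<le>k. int_binom a i * int_binom b (k - i))"
proof -
  have "rat_of_int (int_binom (a + b) k) = rat_of_int (\<Sum>i\<le>k. int_binom a i * int_binom b (k - i))"
    using gbinomial_Vandermonde[of "rat_of_int a" "rat_of_int b" k]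
    by (simp add: ib_rat atLeast0AtMost)
  then show ?thesis by (simp only: of_int_eq_iff)
qed

section \<open>The truncated binomial series\<close>

definition Ef :: "nat \<Rightarrow> int \<Rightarrow> ('b multiset \<Rightarrow>\<^sub>0 int) \<Rightarrow> ('b multiset \<Rightarrow>\<^sub>0 int)" where
  "Ef n a N = (\<Sum>k\<le>n. of_int (int_binom a k) * N ^ k)"

lemma sum_atMost_split0: "(\<Sum>k\<le>n. f k) = f 0 + (\<Sum>k\<in>{1..n}. f k)" for f :: "nat \<Rightarrow> 'c::comm_monoid_add"
proof -
  have "{..n} = insert 0 {1..n}" by auto
  then show ?thesis by simp
qed

lemma Ef_0a [simp]: "Ef n 0 N = 1"
  unfolding Ef_def by (subst sum_atMost_split0) (simp add: ib_zero)

lemma Ef_a0 [simp]: "Ef n a 0 = 1"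
  unfolding Ef_def by (subst sum_atMost_split0) (auto intro!: sum.neutral simp: power_0_left)

lemma Dg_pow1: "N \<in> Dg 1 \<Longrightarrow> 1 \<le> i \<Longrightarrow> N ^ i \<in> Dg 1"
  using Dg_power[of N 1 i] Dg_mono by auto

lemma Ef_minus1: "Ef n a N - 1 = (\<Sum>k\<in>{1..n}. of_int (int_binom a k) * N ^ k)"
  unfolding Ef_def by (subst sum_atMost_split0) simp

lemma Ef_Dg1: "N \<in> Dg 1 \<Longrightarrow> Ef n a N - 1 \<in> Dg 1"
  unfolding Ef_minus1
  by (intro Dg_sum) (auto intro!: Dg_mult_left Dg_pow1[where N=N, simplified])

lemma Ef_1: assumes N: "N \<in> Dg 1" shows "eqv n (Ef n 1 N) (1 + N)"
proof (cases n)
  case 0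
  then show ?thesis using Dg_uminus[OF N]
    by (simp add: Ef_def eqv_def Zs_def)
next
  case (Suc m)
  have "Ef n 1 N - 1 = (\<Sum>k\<in>{1..n}. of_int (int_binom 1 k) * N ^ k)" by (rule Ef_minus1)
  also have "\<dots> = (\<Sum>k\<in>{1}. of_int (int_binom 1 k) * N ^ k)"
    by (rule sum.mono_neutral_right) (auto simp: ib_one Suc)
  finally have "Ef n 1 N - 1 = N" by (simp add: ib_one)
  then have "Ef n 1 N = 1 + N" by (metis add.commute diff_add_cancel)
  then show ?thesis by simp
qed

lemma Dg_Zs: "x \<in> Dg k \<Longrightarrow> Suc n \<le> k \<Longrightarrow> x \<in> Zs n"
  unfolding Zs_def by (rule Dg_mono)

lemma Ef_add:
  assumes N: "N \<in> Dg 1"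
  shows "eqv n (Ef n (a + b) N) (Ef n a N * Ef n b N)"
proof -
  define g where "g i j = of_int (int_binom a i * int_binom b j) * N ^ (i + j)" for i j
  have "Ef n a N * Ef n b N = (\<Sum>i\<le>n. \<Sum>j\<le>n. g i j)"
    unfolding Ef_def g_def by (simp add: sum_product power_add algebra_simps)
  also have "\<dots> = (\<Sum>(i,j)\<in>{..n}\<times>{..n}. g i j)" by (simp add: sum.cartesian_product)
  also have "\<dots> = (\<Sum>(i,j)\<in>{(i,j). i + j \<le> n}. g i j) + (\<Sum>(i,j)\<in>{..n}\<times>{..n} - {(i,j). i + j \<le> n}. g i j)"
  proof -
    have "{(i,j). i + j \<le> n} \<subseteq> {..n}\<times>{..n}" by auto
    then show ?thesis by (subst sum.subset_diff[of "{(i,j). i + j \<le> n}"]) auto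
  qed
  finally have e: "Ef n a N * Ef n b N = (\<Sum>(i,j)\<in>{(i,j). i + j \<le> n}. g i j) + (\<Sum>(i,j)\<in>{..n}\<times>{..n} - {(i,j). i + j \<le> n}. g i j)" .
  have r: "(\<Sum>(i,j)\<in>{..n}\<times>{..n} - {(i,j). i + j \<le> n}. g i j) \<in> Zs n"
    unfolding Zs_def
  proof (intro Dg_sum)
    fix p assume "p \<in> {..n}\<times>{..n} - {(i,j). i + j \<le> n}"
    then obtain i j where p: "p = (i,j)" "Suc n \<le> i + j" by auto
    have "N ^ (i+j) \<in> Dg (1 * (i + j))" by (rule Dg_power[OF N])
    then show "(case p of (i,j) \<Rightarrow> g i j) \<in> Dg (Suc n)"
      unfolding p g_def by (auto intro: Dg_mult_left Dg_mono[OF _ p(2)])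
  qed
  have t: "(\<Sum>(i,j)\<in>{(i,j). i + j \<le> n}. g i j) = Ef n (a + b) N"
    unfolding sum.triangle_reindex_eq Ef_def ib_vandermonde g_def
    by (simp add: sum_distrib_right)
  show ?thesis using r e t Dg_uminus by (simp add: eqv_def Zs_def)
qed

lemma Ef_step: "N \<in> Dg 1 \<Longrightarrow> eqv n (Ef n (a + 1) N) (Ef n a N * (1 + N))"
  using Ef_add[of N n a 1] Ef_1[of N n] by (meson eqv_mult eqv_refl eqv_trans)

lemma Ef_inv: "N \<in> Dg 1 \<Longrightarrow> eqv n (Ef n (-1) N * (1 + N)) 1"
proof -
  assume N: "N \<in> Dg 1"
  have "eqv n (Ef n (-1 + 1) N) (Ef n (-1) N * (1 + N))" by (rule Ef_step[OF N])
  then show ?thesis by (simp add: eqv_sym)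
qed

lemma Ef_char:
  assumes N: "N \<in> Dg 1" and z: "eqv n (\<phi> 0) 1" and s: "\<And>a. eqv n (\<phi> (a + 1)) (\<phi> a * (1 + N))"
  shows "eqv n (\<phi> a) (Ef n a N)"
proof (induction a rule: int_induct[where k=0])
  case base then show ?case using z by simp
next
  case (step1 i)
  then show ?case using s[of i] Ef_step[OF N, of n i]
    by (meson eqv_mult eqv_refl eqv_sym eqv_trans)
next
  case (step2 i)
  have "eqv n (\<phi> (i - 1)) (\<phi> (i - 1) * (1 + N) * Ef n (-1) N)"
    using Ef_inv[OF N, of n] eqv_mult[OF eqv_refl[of n "\<phi> (i - 1)"]] eqv_sym
    by (metis mult.assoc mult.commute mult_1_right)
  moreover have "eqv n (\<phi> (i - 1) * (1 + N)) (\<phi> i)" using s[of "i - 1"] eqv_sym by simp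
  moreover have "eqv n (Ef n i N * Ef n (-1) N) (Ef n (i - 1) N)"
    using Ef_add[OF N, of n i "-1"] eqv_sym by simp
  ultimately show ?case using step2
    by (meson eqv_mult eqv_refl eqv_trans)
qed

lemma Ef_cong: "eqv n N N' \<Longrightarrow> eqv n (Ef n a N) (Ef n a N')"
  unfolding Ef_def by (intro eqv_sum eqv_mult eqv_refl eqv_power)

lemma Ef_nat: "N \<in> Dg 1 \<Longrightarrow> eqv n (Ef n (int k) N) ((1 + N) ^ k)"
proof (induction k)
  case 0 then show ?case by simp
next
  case (Suc k)
  have "eqv n (Ef n (int k + 1) N) (Ef n (int k) N * (1 + N))" by (rule Ef_step[OF Suc.prems])
  moreover have "eqv n (Ef n (int k) N * (1 + N)) ((1 + N) ^ k * (1 + N))"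
    using Suc by (intro eqv_mult) auto
  ultimately show ?case by (auto simp: mult.commute add.commute intro: eqv_trans)
qed

lemma Dg1_mul: "N \<in> Dg 1 \<Longrightarrow> N' \<in> Dg 1 \<Longrightarrow> (1 + N) * (1 + N') - 1 \<in> Dg 1"
proof -
  assume a: "N \<in> Dg 1" "N' \<in> Dg 1"
  have "(1 + N) * (1 + N') - 1 = N + N' + N * N'" by (simp add: algebra_simps)
  then show ?thesis using a by (metis Dg_add Dg_mult_left)
qed

lemma Ef_mul:
  assumes N: "N \<in> Dg 1" and N': "N' \<in> Dg 1"
  shows "eqv n (Ef n a ((1 + N) * (1 + N') - 1)) (Ef n a N * Ef n a N')"
proof -
  let ?M = "(1 + N) * (1 + N') - 1"
  have "eqv n (Ef n a N * Ef n a N') (Ef n a ?M)"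
  proof (rule Ef_char[OF Dg1_mul[OF N N']])
    show "eqv n (Ef n 0 N * Ef n 0 N') 1" by simp
    fix a
    have "eqv n (Ef n (a + 1) N * Ef n (a + 1) N') (Ef n a N * (1 + N) * (Ef n a N' * (1 + N')))"
      by (intro eqv_mult Ef_step N N')
    then show "eqv n (Ef n (a + 1) N * Ef n (a + 1) N') (Ef n a N * Ef n a N' * (1 + ?M))"
      by (simp add: algebra_simps)
  qed
  then show ?thesis by (rule eqv_sym)
qed

lemma Ef_comp:
  assumes N: "N \<in> Dg 1"
  shows "eqv n (Ef n a (Ef n b N - 1)) (Ef n (a * b) N)"
proof -
  have "eqv n (Ef n (a * b) N) (Ef n a (Ef n b N - 1))"
  proof (rule Ef_char[OF Ef_Dg1[OF N]])
    show "eqv n (Ef n (0 * b) N) 1" by simp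
    fix a
    have "eqv n (Ef n (a * b + b) N) (Ef n (a * b) N * Ef n b N)" by (rule Ef_add[OF N])
    then show "eqv n (Ef n ((a + 1) * b) N) (Ef n (a * b) N * (1 + (Ef n b N - 1)))"
      by (simp add: algebra_simps)
  qed
  then show ?thesis by (rule eqv_sym)
qed

definition lv :: "'c set \<Rightarrow> nat \<Rightarrow> 'c list set" where
  "lv S m = {d. length d = m \<and> set d \<subseteq> S}"

lemma lv_finite: "finite S \<Longrightarrow> finite (lv S m)"
  unfolding lv_def using finite_lists_length_eq[of S m] by (simp add: conj_commute)

lemma lv_0: "lv S 0 = {[]}" by (auto simp: lv_def)

lemma lv_Suc: "lv S (Suc m) = (\<lambda>(t,d). t # d) ` (S \<times> lv S m)"
  unfolding lv_def
  by (auto simp: length_Suc_conv image_iff)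

lemma lv_Suc_inj: "inj_on (\<lambda>(t,d). t # d) A" by (auto simp: inj_on_def)

lemma sum_lv_prod:
  fixes f :: "nat \<Rightarrow> 'c \<Rightarrow> 'r::comm_semiring_1"
  assumes "finite S"
  shows "(\<Sum>d\<in>lv S m. \<Prod>i<m. f i (d ! i)) = (\<Prod>i<m. \<Sum>t\<in>S. f i t)"
proof (induction m arbitrary: f)
  case 0 then show ?case by (simp add: lv_0)
next
  case (Suc m)
  have "(\<Sum>d\<in>lv S (Suc m). \<Prod>i<Suc m. f i (d ! i))
      = (\<Sum>(t,d)\<in>S \<times> lv S m. \<Prod>i<Suc m. f i ((t # d) ! i))"
    unfolding lv_Suc by (subst sum.reindex[OF lv_Suc_inj]) (simp add: case_prod_beta)
  also have "\<dots> = (\<Sum>(t,d)\<in>S \<times> lv S m. f 0 t * (\<Prod>i<m. f (Suc i) (d ! i)))"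
    by (simp only: prod.lessThan_Suc_shift) simp
  also have "\<dots> = (\<Sum>t\<in>S. f 0 t) * (\<Sum>d\<in>lv S m. \<Prod>i<m. f (Suc i) (d ! i))"
    by (simp add: sum.cartesian_product[symmetric] sum_product)
  also have "\<dots> = (\<Sum>t\<in>S. f 0 t) * (\<Prod>i<m. \<Sum>t\<in>S. f (Suc i) t)" using Suc.IH[of "\<lambda>i. f (Suc i)"] by simp
  also have "\<dots> = (\<Prod>i<Suc m. \<Sum>t\<in>S. f i t)" by (simp only: prod.lessThan_Suc_shift)
  finally show ?case .
qed

lemma mv_lv: "mult_vectors n P = lv {1..n} (length P)"
  by (simp add: mult_vectors_def lv_def)

lemma mv_finite: "finite (mult_vectors n P)"
  by (simp add: mv_lv lv_finite)

section \<open>The functional Psi\<close>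

definition pm :: "'a maze \<Rightarrow> 'a corr" where "pm R = map (\<lambda>(x,l,y). (x,y)) R"

definition coef :: "'a maze \<Rightarrow> nat list \<Rightarrow> int" where
  "coef P d = (\<Prod>i<length P. int_binom (plab (P!i)) (d!i))"

definition pe :: "'a \<times> int \<times> 'a \<Rightarrow> 'a \<times> 'a" where "pe p = (psrc p, ptgt p)"

definition xv :: "'a \<times> 'a \<Rightarrow> (('a \<times> 'a) multiset \<Rightarrow>\<^sub>0 int)" where "xv e = frag_of {#e#}"

definition psig :: "nat \<Rightarrow> 'a maze \<Rightarrow> (('a \<times> 'a) multiset \<Rightarrow>\<^sub>0 int)" where
  "psig n P = (\<Sum>d\<in>mult_vectors n P. frag_cmul (coef P d) (frag_of (mset (pm (maze_I P d)))))"

definition Psi :: "nat \<Rightarrow> ('a maze \<Rightarrow>\<^sub>0 int) \<Rightarrow> (('a \<times> 'a) multiset \<Rightarrow>\<^sub>0 int)" where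
  "Psi n = frag_extend (psig n)"

lemma mset_pm_maze_I:
  "length d = length P \<Longrightarrow>
    mset (pm (maze_I P d)) = (\<Sum>i<length P. replicate_mset (d!i) (pe (P!i)))"
proof (induction P arbitrary: d)
  case Nil then show ?case by (simp add: maze_I_def pm_def)
next
  case (Cons p P)
  then obtain t d' where d: "d = t # d'" "length d' = length P" by (cases d) auto
  have "maze_I (p # P) d = replicate t (psrc p, 1, ptgt p) @ maze_I P d'"
    by (simp add: maze_I_def d)
  then have "mset (pm (maze_I (p # P) d)) = replicate_mset t (pe p) + mset (pm (maze_I P d'))"
    by (simp add: pm_def pe_def mset_map)
  also have "\<dots> = replicate_mset t (pe p) + (\<Sum>i<length P. replicate_mset (d'!i) (pe (P!i)))"
    using Cons d by simp
  also have "\<dots> = (\<Sum>i<length (p # P). replicate_mset (d!i) (pe ((p # P)!i)))"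
    by (simp only: length_Cons sum.lessThan_Suc_shift d) simp
  finally show ?case .
qed

lemma frag_of_sum_mset: "frag_of (\<Sum>i\<in>I. M i) = (\<Prod>i\<in>I. frag_of (M i))" for M :: "'i \<Rightarrow> 'b multiset"
  by (induction I rule: infinite_finite_induct) (auto simp: frag_of_mult[symmetric])

lemma frag_of_replicate: "frag_of (replicate_mset k e) = xv e ^ k"
proof (induction k)
  case 0 then show ?case by simp
next
  case (Suc k)
  have "replicate_mset (Suc k) e = {#e#} + replicate_mset k e" by simp
  then show ?case using Suc by (simp only: frag_of_mult[symmetric] xv_def power_Suc)
qed

lemma psig_prod: "psig n P = (\<Prod>i<length P. Ef n (plab (P!i)) (xv (pe (P!i))) - 1)"
proof -
  have "psig n P = (\<Sum>d\<in>lv {1..n} (length P). \<Prod>i<length P. of_int (int_binom (plab (P!i)) (d!i)) * xv (pe (P!i)) ^ (d!i))"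
    unfolding psig_def mv_lv
  proof (rule sum.cong[OF refl])
    fix d assume "d \<in> lv {1..n} (length P)"
    then have l: "length d = length P" by (simp add: lv_def)
    show "frag_cmul (coef P d) (frag_of (mset (pm (maze_I P d)))) =
        (\<Prod>i<length P. of_int (int_binom (plab (P!i)) (d!i)) * xv (pe (P!i)) ^ (d!i))"
      by (simp add: mset_pm_maze_I[OF l] frag_of_sum_mset frag_of_replicate frag_cmul_of_int coef_def
          prod.distrib)
  qed
  also have "\<dots> = (\<Prod>i<length P. \<Sum>t\<in>{1..n}. of_int (int_binom (plab (P!i)) t) * xv (pe (P!i)) ^ t)"
    by (rule sum_lv_prod) simp
  also have "\<dots> = (\<Prod>i<length P. Ef n (plab (P!i)) (xv (pe (P!i))) - 1)"
    by (simp add: Ef_minus1)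
  finally show ?thesis .
qed

lemma xv_Dg1: "xv e \<in> Dg 1" by (simp add: xv_def Dg_def)

section \<open>Counting weak pull-backs\<close>

definition rho :: "'a corr \<Rightarrow> 'a corr \<Rightarrow> nat \<times> nat \<Rightarrow> 'a \<times> 'a" where
  "rho v u = (\<lambda>(i,j). (fst (u!j), snd (v!i)))"

definition cpairs :: "'a corr \<Rightarrow> 'a corr \<Rightarrow> (nat \<times> nat) set" where
  "cpairs v u = {(i,j). i < length v \<and> j < length u \<and> fst (v!i) = snd (u!j)}"

definition wpS :: "'a corr \<Rightarrow> 'a corr \<Rightarrow> nat set \<Rightarrow> nat set \<Rightarrow> (nat \<times> nat) set set" where
  "wpS v u A B = {S. S \<subseteq> cpairs v u \<and> fst ` S = A \<and> snd ` S = B}"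

lemma wp_wpS: "weak_pullbacks v u = wpS v u {..<length v} {..<length u}"
  by (simp add: weak_pullbacks_def wpS_def cpairs_def)

lemma cpairs_finite: "finite (cpairs v u)"
  by (rule finite_subset[of _ "{..<length v} \<times> {..<length u}"]) (auto simp: cpairs_def)

lemma wpS_finite: "finite (wpS v u A B)"
  by (rule finite_subset[of _ "Pow (cpairs v u)"]) (auto simp: wpS_def cpairs_finite)

definition scnt :: "'a corr \<Rightarrow> 'a corr \<Rightarrow> (('a \<times> 'a) multiset \<Rightarrow>\<^sub>0 int)" where
  "scnt v u = (\<Sum>W\<in>weak_pullbacks v u. frag_of (image_mset (rho v u) (mset_set W)))"

definition Cls :: "('a corr \<Rightarrow>\<^sub>0 int) \<Rightarrow> (('a \<times> 'a) multiset \<Rightarrow>\<^sub>0 int)" where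
  "Cls = frag_extend (\<lambda>c. frag_of (mset c))"

lemma mset_sorted_set: "mset (sorted_list_of_set A) = mset_set A"
  by (metis mset_sorted_list_of_multiset sorted_list_of_mset_set)

lemma Cls_scg: "Cls (sur_comp_gen v u) = scnt v u"
proof -
  have "Cls (sur_comp_gen v u) = (\<Sum>W\<in>weak_pullbacks v u.
      frag_of (mset (map (\<lambda>(i,j). (fst (u!j), snd (v!i))) (sorted_list_of_set W))))"
    unfolding sur_comp_gen_def Cls_def
    by (subst frag_extend_sum) (auto simp: wp_wpS wpS_finite)
  also have "\<dots> = scnt v u"
    unfolding scnt_def by (simp add: mset_map mset_sorted_set rho_def)
  finally show ?thesis .
qed

lemma wp_reindex:
  assumes f: "bij_betw f {..<length v} A" and g: "bij_betw g {..<length u} B"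
    and A: "A \<subseteq> {..<length V}" and B: "B \<subseteq> {..<length U}"
    and fv: "\<And>i. i < length v \<Longrightarrow> V ! (f i) = v ! i"
    and gu: "\<And>j. j < length u \<Longrightarrow> U ! (g j) = u ! j"
  shows "scnt v u = (\<Sum>S\<in>wpS V U A B. frag_of (image_mset (rho V U) (mset_set S)))"
proof -
  define f' where "f' = inv_into {..<length v} f"
  define g' where "g' = inv_into {..<length u} g"
  have f'b: "bij_betw f' A {..<length v}" unfolding f'_def by (rule bij_betw_inv_into[OF f])
  have g'b: "bij_betw g' B {..<length u}" unfolding g'_def by (rule bij_betw_inv_into[OF g])
  have ff': "a \<in> A \<Longrightarrow> f (f' a) = a" for a unfolding f'_def using f
    by (meson bij_betw_inv_into_right)
  have gg': "b \<in> B \<Longrightarrow> g (g' b) = b" for b unfolding g'_def using g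
    by (meson bij_betw_inv_into_right)
  have f'f: "i < length v \<Longrightarrow> f' (f i) = i" for i unfolding f'_def using f
    by (meson bij_betw_inv_into_left lessThan_iff)
  have g'g: "j < length u \<Longrightarrow> g' (g j) = j" for j unfolding g'_def using g
    by (meson bij_betw_inv_into_left lessThan_iff)
  have fA: "i < length v \<Longrightarrow> f i \<in> A" for i using f by (auto simp: bij_betw_def)
  have gB: "j < length u \<Longrightarrow> g j \<in> B" for j using g by (auto simp: bij_betw_def)
  have f'A: "a \<in> A \<Longrightarrow> f' a < length v" for a using f'b by (auto simp: bij_betw_def)
  have g'B: "b \<in> B \<Longrightarrow> g' b < length u" for b using g'b by (auto simp: bij_betw_def)
  have fimg: "f ` {..<length v} = A" using f by (simp add: bij_betw_def)
  have gimg: "g ` {..<length u} = B" using g by (simp add: bij_betw_def)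
  have f'img: "f' ` A = {..<length v}" using f'b by (simp add: bij_betw_def)
  have g'img: "g' ` B = {..<length u}" using g'b by (simp add: bij_betw_def)
  show ?thesis
    unfolding scnt_def wp_wpS
  proof (rule sum.reindex_bij_witness[where i="image (map_prod f' g')" and j="image (map_prod f g)"])
    fix S assume S: "S \<in> wpS V U A B"
    then have SAB: "S \<subseteq> A \<times> B" unfolding wpS_def by (auto intro: rev_image_eqI)
    show "map_prod f g ` map_prod f' g' ` S = S"
    proof -
      have "map_prod f g ` map_prod f' g' ` S = (\<lambda>x. x) ` S"
        unfolding image_image using SAB ff' gg' by (intro image_cong) auto
      then show ?thesis by simp
    qed
    show "map_prod f' g' ` S \<in> wpS v u {..<length v} {..<length u}"
      unfolding wpS_def
    proof (intro CollectI conjI)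
      show "map_prod f' g' ` S \<subseteq> cpairs v u"
      proof
        fix x assume "x \<in> map_prod f' g' ` S"
        then obtain a b where ab: "(a,b) \<in> S" "x = (f' a, g' b)" by auto
        then have abc: "a \<in> A" "b \<in> B" "fst (V!a) = snd (U!b)"
          using S SAB by (auto simp: wpS_def cpairs_def)
        have "v ! (f' a) = V ! a" using fv[of "f' a"] f'A[OF abc(1)] ff'[OF abc(1)] by simp
        moreover have "u ! (g' b) = U ! b" using gu[of "g' b"] g'B[OF abc(2)] gg'[OF abc(2)] by simp
        ultimately show "x \<in> cpairs v u" using ab abc f'A g'B by (auto simp: cpairs_def)
      qed
      show "fst ` map_prod f' g' ` S = {..<length v}"
      proof -
        have "fst ` map_prod f' g' ` S = f' ` (fst ` S)" by (auto simp: image_image)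
        then show ?thesis using S f'img by (simp add: wpS_def)
      qed
      show "snd ` map_prod f' g' ` S = {..<length u}"
      proof -
        have "snd ` map_prod f' g' ` S = g' ` (snd ` S)" by (auto simp: image_image)
        then show ?thesis using S g'img by (simp add: wpS_def)
      qed
    qed
  next
    fix W assume W: "W \<in> wpS v u {..<length v} {..<length u}"
    then have Wsub: "W \<subseteq> {..<length v} \<times> {..<length u}" by (auto simp: wpS_def cpairs_def)
    show "map_prod f' g' ` map_prod f g ` W = W"
    proof -
      have "map_prod f' g' ` map_prod f g ` W = (\<lambda>x. x) ` W"
        unfolding image_image using Wsub f'f g'g by (intro image_cong) auto
      then show ?thesis by simp
    qed
    show "map_prod f g ` W \<in> wpS V U A B"
      unfolding wpS_def
    proof (intro CollectI conjI)
      show "map_prod f g ` W \<subseteq> cpairs V U"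
      proof
        fix x assume "x \<in> map_prod f g ` W"
        then obtain i j where ij: "(i,j) \<in> W" "x = (f i, g j)" by auto
        then have "i < length v" "j < length u" "fst (v!i) = snd (u!j)"
          using W by (auto simp: wpS_def cpairs_def)
        moreover have "f i < length V" "g j < length U" using fA gB A B \<open>i < length v\<close> \<open>j < length u\<close> by auto
        ultimately show "x \<in> cpairs V U" using ij fv gu by (auto simp: cpairs_def)
      qed
      show "fst ` map_prod f g ` W = A"
      proof -
        have "fst ` map_prod f g ` W = f ` (fst ` W)" by (auto simp: image_image)
        then show ?thesis using W fimg by (simp add: wpS_def)
      qed
      show "snd ` map_prod f g ` W = B"
      proof -
        have "snd ` map_prod f g ` W = g ` (snd ` W)" by (auto simp: image_image)
        then show ?thesis using W gimg by (simp add: wpS_def)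
      qed
    qed
    have inj: "inj_on (map_prod f g) W"
    proof (rule inj_onI)
      fix x y assume "x \<in> W" "y \<in> W" "map_prod f g x = map_prod f g y"
      then show "x = y" using f'f g'g Wsub by (cases x; cases y) (metis map_prod_simp Pair_inject lessThan_iff mem_Sigma_iff subsetD)
    qed
    have fin: "finite W" using Wsub by (rule finite_subset) auto
    have "image_mset (rho V U) (mset_set (map_prod f g ` W))
        = image_mset (rho V U) (image_mset (map_prod f g) (mset_set W))"
      by (simp add: image_mset_mset_set[OF inj])
    also have "\<dots> = image_mset (rho v u) (mset_set W)"
      unfolding multiset.map_comp
      by (rule image_mset_cong) (use Wsub fin fv gu in \<open>auto simp: rho_def\<close>)
    finally show "frag_of (image_mset (rho V U) (mset_set (map_prod f g ` W)))
        = frag_of (image_mset (rho v u) (mset_set W))" by simp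
  qed
qed

lemma scnt_perm: "mset v = mset v' \<Longrightarrow> mset u = mset u' \<Longrightarrow> scnt v u = scnt v' u'"
proof -
  assume a: "mset v = mset v'" "mset u = mset u'"
  obtain f where f: "bij_betw f {..<length v} {..<length v'}" "\<forall>i<length v. v!i = v'!(f i)"
    using permutation_Ex_bij[OF a(1)] by blast
  obtain g where g: "bij_betw g {..<length u} {..<length u'}" "\<forall>i<length u. u!i = u'!(g i)"
    using permutation_Ex_bij[OF a(2)] by blast
  have "scnt v u = (\<Sum>S\<in>wpS v' u' {..<length v'} {..<length u'}. frag_of (image_mset (rho v' u') (mset_set S)))"
    by (rule wp_reindex[OF f(1) g(1)]) (use f g in auto)
  then show ?thesis by (simp add: scnt_def wp_wpS)
qed

definition lst :: "'c multiset \<Rightarrow> 'c list" where "lst M = (SOME xs. mset xs = M)"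
lemma mset_lst [simp]: "mset (lst M) = M"
  unfolding lst_def by (rule someI_ex) (rule ex_mset)

definition scnt' :: "('a \<times> 'a) multiset \<Rightarrow> ('a \<times> 'a) multiset \<Rightarrow> (('a \<times> 'a) multiset \<Rightarrow>\<^sub>0 int)" where
  "scnt' M N = scnt (lst M) (lst N)"

lemma scnt_scnt': "scnt v u = scnt' (mset v) (mset u)"
  unfolding scnt'_def by (rule scnt_perm) auto

definition sub :: "'c list \<Rightarrow> nat set \<Rightarrow> 'c list" where
  "sub V D = map (nth V) (sorted_list_of_set D)"

definition msub :: "'c list \<Rightarrow> nat set \<Rightarrow> 'c multiset" where
  "msub V D = image_mset (nth V) (mset_set D)"

lemma mset_sub: "mset (sub V D) = msub V D"
  by (simp add: sub_def msub_def mset_map mset_sorted_set)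

lemma scnt_sub:
  assumes D: "D \<subseteq> {..<length V}" and E: "E \<subseteq> {..<length U}"
  shows "scnt (sub V D) (sub U E) = (\<Sum>S\<in>wpS V U D E. frag_of (image_mset (rho V U) (mset_set S)))"
proof -
  have fD: "finite D" using D finite_subset by blast
  have fE: "finite E" using E finite_subset by blast
  have bD: "bij_betw (nth (sorted_list_of_set D)) {..<length (sub V D)} D"
    by (rule bij_betw_nth) (auto simp: sub_def fD)
  have bE: "bij_betw (nth (sorted_list_of_set E)) {..<length (sub U E)} E"
    by (rule bij_betw_nth) (auto simp: sub_def fE)
  show ?thesis
    by (rule wp_reindex[OF bD bE D E]) (auto simp: sub_def)
qed

lemma image_mset_sum_singletons: "finite S \<Longrightarrow> image_mset r (mset_set S) = (\<Sum>w\<in>S. {#r w#})"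
  by (induction S rule: finite_induct) auto

lemma total_sum:
  "(\<Sum>D\<in>Pow {..<length V}. \<Sum>E\<in>Pow {..<length U}. scnt (sub V D) (sub U E))
    = (\<Prod>w\<in>cpairs V U. 1 + xv (rho V U w))"
proof -
  define h where "h S = frag_of (image_mset (rho V U) (mset_set S))" for S
  have "(\<Sum>D\<in>Pow {..<length V}. \<Sum>E\<in>Pow {..<length U}. scnt (sub V D) (sub U E))
      = (\<Sum>D\<in>Pow {..<length V}. \<Sum>E\<in>Pow {..<length U}. \<Sum>S\<in>wpS V U D E. h S)"
    unfolding h_def by (intro sum.cong refl scnt_sub) auto
  also have "\<dots> = (\<Sum>(D,E)\<in>Pow {..<length V} \<times> Pow {..<length U}. \<Sum>S\<in>wpS V U D E. h S)"
    by (simp add: sum.cartesian_product)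
  also have "\<dots> = (\<Sum>y\<in>Pow {..<length V} \<times> Pow {..<length U}.
         sum h {S \<in> Pow (cpairs V U). (fst ` S, snd ` S) = y})"
    by (intro sum.cong refl) (auto simp: wpS_def)
  also have "\<dots> = sum h (Pow (cpairs V U))"
    by (rule sum.group) (use cpairs_finite[unfolded cpairs_def] in \<open>auto simp: cpairs_def\<close>)
  also have "\<dots> = (\<Sum>S\<in>Pow (cpairs V U). prod (\<lambda>w. xv (rho V U w)) S * prod (\<lambda>w. 1) (cpairs V U - S))"
  proof (intro sum.cong refl)
    fix S assume "S \<in> Pow (cpairs V U)"
    then have "finite S" using cpairs_finite finite_subset by blast
    then show "h S = prod (\<lambda>w. xv (rho V U w)) S * prod (\<lambda>w. 1) (cpairs V U - S)"
      by (simp add: h_def image_mset_sum_singletons frag_of_sum_mset xv_def)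
  qed
  also have "\<dots> = (\<Prod>w\<in>cpairs V U. xv (rho V U w) + 1)"
    by (rule prod_add[symmetric]) (rule cpairs_finite)
  finally show ?thesis by (simp add: add.commute)
qed

definition le_vec :: "nat list \<Rightarrow> nat list set" where
  "le_vec d = {d'. length d' = length d \<and> (\<forall>i<length d. d'!i \<le> d!i)}"

lemma le_vec_Nil: "le_vec [] = {[]}" by (auto simp: le_vec_def)
lemma le_vec_Cons: "le_vec (t # d) = (\<lambda>(k,d'). k # d') ` ({..t} \<times> le_vec d)"
proof -
  have "x \<in> le_vec (t # d) \<longleftrightarrow> x \<in> (\<lambda>(k,d'). k # d') ` ({..t} \<times> le_vec d)" for x
  proof (cases x)
    case Nil then show ?thesis by (auto simp: le_vec_def)
  next
    case (Cons k d')
    then show ?thesis by (auto simp: le_vec_def image_iff nth_Cons split: nat.splits)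
  qed
  then show ?thesis by blast
qed
lemma le_vec_finite: "finite (le_vec d)"
  by (induction d) (auto simp: le_vec_Nil le_vec_Cons)

definition pI :: "'a maze \<Rightarrow> nat list \<Rightarrow> 'a corr" where "pI P d = pm (maze_I P d)"

lemma pI_Cons: "pI (p # P) (t # d) = replicate t (pe p) @ pI P d"
  by (simp add: pI_def pm_def maze_I_def pe_def psrc_def ptgt_def)
lemma pI_Nil: "pI [] [] = []" by (simp add: pI_def pm_def maze_I_def)

lemma split_aux1: "D1 \<subseteq> {..<t} \<Longrightarrow> (D1 \<union> (\<lambda>x. x + t) ` D2) \<inter> {..<t} = D1"
  for t :: nat by auto
lemma split_aux2: "D1 \<subseteq> {..<t} \<Longrightarrow> (\<lambda>x. x - t) ` ((D1 \<union> (\<lambda>x. x + t) ` D2) - {..<t}) = D2"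
  for t :: nat
proof -
  assume "D1 \<subseteq> {..<t}"
  then have "(D1 \<union> (\<lambda>x. x + t) ` D2) - {..<t} = (\<lambda>x. x + t) ` D2" by auto
  then show ?thesis by (simp add: image_image)
qed
lemma split_aux3: "(\<lambda>x. x + t) ` (\<lambda>x. x - t) ` (D - {..<t}) = D - {..<t}" for t :: nat
  by (auto simp: image_image image_iff)

lemma Pow_split_sum:
  fixes t m :: nat
  shows "(\<Sum>D\<in>Pow {..<t+m}. F D) = (\<Sum>D1\<in>Pow {..<t}. \<Sum>D2\<in>Pow {..<m}. F (D1 \<union> (\<lambda>x. x + t) ` D2))"
proof -
  have "(\<Sum>D1\<in>Pow {..<t}. \<Sum>D2\<in>Pow {..<m}. F (D1 \<union> (\<lambda>x. x + t) ` D2))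
      = (\<Sum>(D1,D2)\<in>Pow {..<t} \<times> Pow {..<m}. F (D1 \<union> (\<lambda>x. x + t) ` D2))"
    by (simp add: sum.cartesian_product)
  also have "\<dots> = (\<Sum>D\<in>Pow {..<t+m}. F D)"
    apply (rule sum.reindex_bij_witness[where i="\<lambda>D. (D \<inter> {..<t}, (\<lambda>x. x - t) ` (D - {..<t}))"
        and j="\<lambda>(D1,D2). D1 \<union> (\<lambda>x. x + t) ` D2"])
        apply (auto simp: split_aux1 split_aux2 split_aux3)
    done
  finally show ?thesis ..
qed

lemma msub_split:
  fixes t :: nat
  assumes D1: "D1 \<subseteq> {..<t}" and D2: "D2 \<subseteq> {..<length ys}"
  shows "msub (replicate t a @ ys) (D1 \<union> (\<lambda>x. x + t) ` D2) = replicate_mset (card D1) a + msub ys D2"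
proof -
  have f1: "finite D1" using D1 finite_subset by blast
  have f2: "finite D2" using D2 finite_subset by blast
  have "mset_set (D1 \<union> (\<lambda>x. x + t) ` D2) = mset_set D1 + mset_set ((\<lambda>x. x + t) ` D2)"
    by (rule mset_set_Union) (use f1 f2 D1 in auto)
  also have "mset_set ((\<lambda>x. x + t) ` D2) = image_mset (\<lambda>x. x + t) (mset_set D2)"
    by (rule image_mset_mset_set[symmetric]) (auto simp: inj_on_def)
  finally have e: "mset_set (D1 \<union> (\<lambda>x. x + t) ` D2) = mset_set D1 + image_mset (\<lambda>x. x + t) (mset_set D2)" .
  have a1: "image_mset (nth (replicate t a @ ys)) (mset_set D1) = replicate_mset (card D1) a"
  proof -
    have "image_mset (nth (replicate t a @ ys)) (mset_set D1) = image_mset (\<lambda>_. a) (mset_set D1)"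
      by (rule image_mset_cong) (use D1 f1 in \<open>auto simp: nth_append\<close>)
    then show ?thesis by (simp add: image_mset_const_eq)
  qed
  have a2: "image_mset (nth (replicate t a @ ys)) (image_mset (\<lambda>x. x + t) (mset_set D2)) = image_mset (nth ys) (mset_set D2)"
    unfolding multiset.map_comp
    by (rule image_mset_cong) (use D2 f2 in \<open>auto simp: nth_append\<close>)
  show ?thesis unfolding msub_def e image_mset_union a1 a2 ..
qed

lemma card_group_sum:
  fixes g :: "nat \<Rightarrow> 'r::comm_semiring_1"
  shows "(\<Sum>D\<in>Pow {..<t}. g (card D)) = (\<Sum>k\<le>t. of_nat (t choose k) * g k)"
proof -
  have "(\<Sum>D\<in>Pow {..<t}. g (card D)) = (\<Sum>k\<in>{..t}. \<Sum>D\<in>{D \<in> Pow {..<t}. card D = k}. g (card D))"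
    by (rule sum.group[symmetric]) (auto simp: card_mono[of "{..<t}", simplified])
  also have "\<dots> = (\<Sum>k\<in>{..t}. of_nat (t choose k) * g k)"
  proof (intro sum.cong refl)
    fix k
    have "{D \<in> Pow {..<t}. card D = k} = {B. B \<subseteq> {..<t} \<and> card B = k}" by auto
    have c: "card {D. D \<subseteq> {..<t} \<and> card D = k} = t choose k" using n_subsets[of "{..<t}" k] by simp
    have "(\<Sum>D\<in>{D \<in> Pow {..<t}. card D = k}. g (card D)) = (\<Sum>D\<in>{D \<in> Pow {..<t}. card D = k}. g k)"
      by (rule sum.cong) auto
    then show "(\<Sum>D\<in>{D \<in> Pow {..<t}. card D = k}. g (card D)) = of_nat (t choose k) * g k"
      by (simp add: c)
  qed
  finally show ?thesis .
qed

definition binv :: "nat list \<Rightarrow> nat list \<Rightarrow> nat" where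
  "binv d d' = (\<Prod>i<length d. d!i choose d'!i)"

lemma binv_Cons: "binv (t # d) (k # d') = (t choose k) * binv d d'"
  by (simp add: binv_def prod.lessThan_Suc_shift del: prod.lessThan_Suc)

lemma grouping:
  fixes h :: "('a \<times> 'a) multiset \<Rightarrow> 'r::comm_semiring_1"
  assumes "length d = length P"
  shows "(\<Sum>D\<in>Pow {..<length (pI P d)}. h (msub (pI P d) D))
        = (\<Sum>d'\<in>le_vec d. of_nat (binv d d') * h (mset (pI P d')))"
  using assms
proof (induction P arbitrary: d h)
  case Nil
  then show ?case by (simp add: pI_Nil le_vec_Nil msub_def binv_def)
next
  case (Cons p P)
  then obtain t d0 where d: "d = t # d0" "length d0 = length P" by (cases d) auto
  let ?V0 = "pI P d0"
  have "(\<Sum>D\<in>Pow {..<length (pI (p # P) d)}. h (msub (pI (p # P) d) D))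
      = (\<Sum>D1\<in>Pow {..<t}. \<Sum>D2\<in>Pow {..<length ?V0}. h (msub (replicate t (pe p) @ ?V0) (D1 \<union> (\<lambda>x. x + t) ` D2)))"
    unfolding d pI_Cons by (simp add: Pow_split_sum)
  also have "\<dots> = (\<Sum>D1\<in>Pow {..<t}. \<Sum>D2\<in>Pow {..<length ?V0}. h (replicate_mset (card D1) (pe p) + msub ?V0 D2))"
    by (intro sum.cong refl) (simp add: msub_split)
  also have "\<dots> = (\<Sum>D1\<in>Pow {..<t}. \<Sum>d'\<in>le_vec d0. of_nat (binv d0 d') * h (replicate_mset (card D1) (pe p) + mset (pI P d')))"
    by (intro sum.cong refl Cons.IH[OF d(2)])
  also have "\<dots> = (\<Sum>k\<le>t. of_nat (t choose k) * (\<Sum>d'\<in>le_vec d0. of_nat (binv d0 d') * h (replicate_mset k (pe p) + mset (pI P d'))))"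
    by (rule card_group_sum)
  also have "\<dots> = (\<Sum>(k,d')\<in>{..t} \<times> le_vec d0. of_nat (binv (t # d0) (k # d')) * h (mset (pI (p # P) (k # d'))))"
    by (simp add: sum.cartesian_product[symmetric] sum_distrib_left binv_Cons pI_Cons mult.assoc)
  also have "\<dots> = (\<Sum>d'\<in>le_vec d. of_nat (binv d d') * h (mset (pI (p # P) d')))"
    unfolding d le_vec_Cons
    by (subst sum.reindex) (auto simp: inj_on_def case_prod_beta)
  finally show ?case .
qed

definition tau :: "'a \<times> 'a \<Rightarrow> 'a \<times> 'a \<Rightarrow> (('a \<times> 'a) multiset \<Rightarrow>\<^sub>0 int)" where
  "tau v u = (if fst v = snd u then 1 + xv (fst u, snd v) else 1)"

lemma prod_nth_mset: "(\<Prod>i<length xs. f (xs ! i)) = prod_mset (image_mset f (mset xs))"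
  for f :: "'c \<Rightarrow> 'r::comm_monoid_mult"
proof (induction xs)
  case Nil then show ?case by simp
next
  case (Cons x xs)
  then show ?case by (simp only: length_Cons prod.lessThan_Suc_shift) simp
qed

lemma prod_mset_sum: "prod_mset (image_mset f (\<Sum>i\<in>I. M i)) = (\<Prod>i\<in>I. prod_mset (image_mset f (M i)))"
  for f :: "'c \<Rightarrow> 'r::comm_monoid_mult"
  by (induction I rule: infinite_finite_induct) auto

lemma prod_pI:
  fixes f :: "'a \<times> 'a \<Rightarrow> 'r::comm_monoid_mult"
  assumes "length d = length P"
  shows "(\<Prod>i<length (pI P d). f (pI P d ! i)) = (\<Prod>i<length P. f (pe (P!i)) ^ (d!i))"
  unfolding prod_nth_mset pI_def mset_pm_maze_I[OF assms] prod_mset_sum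
  by (simp add: image_replicate_mset)

lemma Tm_fact:
  "(\<Prod>w\<in>cpairs V U. 1 + xv (rho V U w)) = (\<Prod>i<length V. \<Prod>j<length U. tau (V!i) (U!j))"
proof -
  have "(\<Prod>w\<in>cpairs V U. 1 + xv (rho V U w)) = (\<Prod>w\<in>{..<length V} \<times> {..<length U}. tau (V!fst w) (U!snd w))"
    by (rule prod.mono_neutral_cong_left) (auto simp: cpairs_def tau_def rho_def)
  then show ?thesis by (simp add: prod.cartesian_product case_prod_beta)
qed

lemma Tm_pI:
  assumes "length d = length P" "length e = length Q"
  shows "(\<Prod>w\<in>cpairs (pI P d) (pI Q e). 1 + xv (rho (pI P d) (pI Q e) w))
      = (\<Prod>i<length P. \<Prod>j<length Q. tau (pe (P!i)) (pe (Q!j)) ^ (d!i * e!j))"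
proof -
  have "(\<Prod>w\<in>cpairs (pI P d) (pI Q e). 1 + xv (rho (pI P d) (pI Q e) w))
      = (\<Prod>i<length (pI P d). (\<lambda>v. \<Prod>j<length (pI Q e). tau v (pI Q e ! j)) (pI P d ! i))"
    by (simp add: Tm_fact)
  also have "\<dots> = (\<Prod>i<length P. (\<Prod>j<length (pI Q e). tau (pe (P!i)) (pI Q e ! j)) ^ (d!i))"
    by (rule prod_pI[OF assms(1)])
  also have "\<dots> = (\<Prod>i<length P. (\<Prod>j<length Q. tau (pe (P!i)) (pe (Q!j)) ^ (e!j)) ^ (d!i))"
    by (simp add: prod_pI[OF assms(2)])
  also have "\<dots> = (\<Prod>i<length P. \<Prod>j<length Q. tau (pe (P!i)) (pe (Q!j)) ^ (d!i * e!j))"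
    by (simp add: prod_power_distrib power_mult[symmetric] mult.commute)
  finally show ?thesis .
qed

lemma T_nat:
  assumes dl: "length d = length P" and el: "length e = length Q"
  shows "(\<Sum>d'\<in>le_vec d. \<Sum>e'\<in>le_vec e. of_nat (binv d d') * of_nat (binv e e') * scnt (pI P d') (pI Q e'))
      = (\<Prod>i<length P. \<Prod>j<length Q. tau (pe (P!i)) (pe (Q!j)) ^ (d!i * e!j))"
proof -
  let ?V = "pI P d" and ?U = "pI Q e"
  have "(\<Prod>i<length P. \<Prod>j<length Q. tau (pe (P!i)) (pe (Q!j)) ^ (d!i * e!j))
      = (\<Sum>D\<in>Pow {..<length ?V}. \<Sum>E\<in>Pow {..<length ?U}. scnt (sub ?V D) (sub ?U E))"
    by (simp add: total_sum Tm_pI[OF dl el])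
  also have "\<dots> = (\<Sum>D\<in>Pow {..<length ?V}. (\<lambda>M. \<Sum>E\<in>Pow {..<length ?U}. scnt' M (msub ?U E)) (msub ?V D))"
    by (simp add: scnt_scnt' mset_sub)
  also have "\<dots> = (\<Sum>d'\<in>le_vec d. of_nat (binv d d') * (\<Sum>E\<in>Pow {..<length ?U}. scnt' (mset (pI P d')) (msub ?U E)))"
    by (rule grouping[OF dl])
  also have "\<dots> = (\<Sum>d'\<in>le_vec d. of_nat (binv d d') * (\<Sum>e'\<in>le_vec e. of_nat (binv e e') * scnt' (mset (pI P d')) (mset (pI Q e'))))"
    by (intro sum.cong refl arg_cong[where f="\<lambda>x. _ * x"] grouping[OF el])
  also have "\<dots> = (\<Sum>d'\<in>le_vec d. \<Sum>e'\<in>le_vec e. of_nat (binv d d') * of_nat (binv e e') * scnt (pI P d') (pI Q e'))"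
    by (simp add: sum_distrib_left scnt_scnt' mult.assoc)
  finally show ?thesis ..
qed

lemma binom_expand:
  fixes M :: "nat \<Rightarrow> 'r::comm_semiring_1"
  shows "(\<Prod>i<length d. (1 + M i) ^ (d!i)) = (\<Sum>d'\<in>le_vec d. of_nat (binv d d') * (\<Prod>i<length d. M i ^ (d'!i)))"
proof (induction d arbitrary: M)
  case Nil then show ?case by (simp add: le_vec_Nil binv_def)
next
  case (Cons t d)
  have "(\<Prod>i<length (t # d). (1 + M i) ^ ((t # d)!i)) = (1 + M 0) ^ t * (\<Prod>i<length d. (1 + M (Suc i)) ^ (d!i))"
    by (simp only: length_Cons prod.lessThan_Suc_shift) simp
  also have "\<dots> = (\<Sum>k\<le>t. of_nat (t choose k) * M 0 ^ k) * (\<Sum>d'\<in>le_vec d. of_nat (binv d d') * (\<Prod>i<length d. M (Suc i) ^ (d'!i)))"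
    using Cons.IH[of "\<lambda>i. M (Suc i)"] binomial_ring[of "M 0" 1 t] by (simp add: add.commute mult.commute)
  also have "\<dots> = (\<Sum>(k,d')\<in>{..t} \<times> le_vec d. of_nat (binv (t # d) (k # d')) * (\<Prod>i<length (t # d). M i ^ ((k # d')!i)))"
    by (simp only: length_Cons prod.lessThan_Suc_shift sum_product sum.cartesian_product binv_Cons)
       (simp add: case_prod_beta algebra_simps)
  also have "\<dots> = (\<Sum>d'\<in>le_vec (t # d). of_nat (binv (t # d) d') * (\<Prod>i<length (t # d). M i ^ (d'!i)))"
    unfolding le_vec_Cons by (subst sum.reindex) (auto simp: inj_on_def case_prod_beta)
  finally show ?case .
qed

lemma le_vec_self: "d \<in> le_vec d" by (simp add: le_vec_def)
lemma binv_self: "binv d d = 1" by (simp add: binv_def)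
lemma le_vec_sum_less: "d' \<in> le_vec d \<Longrightarrow> d' \<noteq> d \<Longrightarrow> sum_list d' < sum_list d"
proof -
  assume a: "d' \<in> le_vec d" "d' \<noteq> d"
  then have l: "length d' = length d" and le: "\<forall>i<length d. d'!i \<le> d!i" by (auto simp: le_vec_def)
  have "\<exists>k<length d. d'!k \<noteq> d!k"
  proof (rule ccontr)
    assume "\<not> (\<exists>k<length d. d'!k \<noteq> d!k)"
    then have "d' = d" using l by (simp add: nth_equalityI)
    then show False using a(2) by simp
  qed
  then obtain k where k: "k < length d" "d'!k \<noteq> d!k" by blast
  have "sum_list d' = (\<Sum>i<length d. d'!i)" using l by (simp add: sum_list_sum_nth atLeast0LessThan)
  also have "\<dots> < (\<Sum>i<length d. d!i)"
    using le k by (intro sum_strict_mono_ex1) (auto intro!: bexI[of _ k] simp: le_neq_implies_less)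
  also have "\<dots> = sum_list d" by (simp add: sum_list_sum_nth atLeast0LessThan)
  finally show ?thesis .
qed
lemma le_vec_trans_length: "d' \<in> le_vec d \<Longrightarrow> length d' = length d" by (simp add: le_vec_def)


lemma zeta_inversion:
  fixes X :: "nat list \<Rightarrow> 'r::comm_ring_1"
  assumes S0: "0 \<in> S" and Sd: "\<And>x y. x \<in> S \<Longrightarrow> y \<in> S \<Longrightarrow> x - y \<in> S"
    and Sm: "\<And>c x. x \<in> S \<Longrightarrow> c * x \<in> S"
    and Z: "\<And>e. length e = p \<Longrightarrow> (\<Sum>e'\<in>le_vec e. of_nat (binv e e') * X e') \<in> S"
  shows "length e = p \<Longrightarrow> X e \<in> S"
proof (induction "sum_list e" arbitrary: e rule: less_induct)
  case less
  have Sa: "x \<in> S \<Longrightarrow> y \<in> S \<Longrightarrow> x + y \<in> S" for x y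
    using Sd[of 0 y] Sd[of x "0 - y"] S0 by simp
  have Ss: "(\<And>i. i \<in> I \<Longrightarrow> f i \<in> S) \<Longrightarrow> sum f I \<in> S" for f and I :: "nat list set"
    by (induction I rule: infinite_finite_induct) (auto simp: S0 Sa)
  have "(\<Sum>e'\<in>le_vec e. of_nat (binv e e') * X e') = X e + (\<Sum>e'\<in>le_vec e - {e}. of_nat (binv e e') * X e')"
    by (subst sum.remove[OF le_vec_finite le_vec_self]) (simp add: binv_self)
  then have "X e = (\<Sum>e'\<in>le_vec e. of_nat (binv e e') * X e') - (\<Sum>e'\<in>le_vec e - {e}. of_nat (binv e e') * X e')"
    by simp
  moreover have "(\<Sum>e'\<in>le_vec e - {e}. of_nat (binv e e') * X e') \<in> S"
    by (intro Ss Sm less.hyps) (auto dest: le_vec_sum_less simp: le_vec_trans_length less.prems)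
  ultimately show ?case using Z[OF less.prems] Sd by simp
qed

lemma Zs_inversion:
  assumes "\<And>e. length e = p \<Longrightarrow> (\<Sum>e'\<in>le_vec e. of_nat (binv e e') * X e') \<in> Zs n"
  shows "length e = p \<Longrightarrow> X e \<in> Zs n"
  by (rule zeta_inversion[of "Zs n", OF _ _ _ assms]) (auto simp: Zs_def intro: Dg_diff Dg_mult_left)

lemma exact_inversion:
  fixes X :: "nat list \<Rightarrow> 'r::comm_ring_1"
  assumes "\<And>e. length e = p \<Longrightarrow> (\<Sum>e'\<in>le_vec e. of_nat (binv e e') * X e') = 0"
  shows "length e = p \<Longrightarrow> X e = 0"
  using zeta_inversion[of "{0}" p X e] assms by auto

lemma Dg1_prod: "finite I \<Longrightarrow> (\<And>i. i \<in> I \<Longrightarrow> M i \<in> Dg 1) \<Longrightarrow> (\<Prod>i\<in>I. 1 + M i) - 1 \<in> Dg 1"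
proof (induction I rule: finite_induct)
  case empty then show ?case by simp
next
  case (insert x I)
  have "(\<Prod>i\<in>insert x I. 1 + M i) - 1 = (1 + M x) * (1 + ((\<Prod>i\<in>I. 1 + M i) - 1)) - 1"
    using insert by simp
  then show ?case using Dg1_mul[of "M x" "(\<Prod>i\<in>I. 1 + M i) - 1"] insert by simp
qed

lemma Ef_prod:
  assumes "finite I" "\<And>i. i \<in> I \<Longrightarrow> M i \<in> Dg 1"
  shows "eqv n (Ef n a ((\<Prod>i\<in>I. 1 + M i) - 1)) (\<Prod>i\<in>I. Ef n a (M i))"
  using assms
proof (induction I rule: finite_induct)
  case empty then show ?case by simp
next
  case (insert x I)
  have e: "(\<Prod>i\<in>insert x I. 1 + M i) - 1 = (1 + M x) * (1 + ((\<Prod>i\<in>I. 1 + M i) - 1)) - 1"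
    using insert by simp
  have "eqv n (Ef n a ((\<Prod>i\<in>insert x I. 1 + M i) - 1)) (Ef n a (M x) * Ef n a ((\<Prod>i\<in>I. 1 + M i) - 1))"
    unfolding e by (rule Ef_mul) (use insert Dg1_prod in auto)
  moreover have "eqv n (Ef n a (M x) * Ef n a ((\<Prod>i\<in>I. 1 + M i) - 1)) (Ef n a (M x) * (\<Prod>i\<in>I. Ef n a (M i)))"
    using insert by (intro eqv_mult eqv_refl) auto
  ultimately show ?case using insert by (auto intro: eqv_trans)
qed

lemma Ef_pow:
  assumes "M \<in> Dg 1"
  shows "eqv n (Ef n a ((1 + M) ^ k - 1)) (Ef n a M ^ k)"
  using Ef_prod[of "{..<k}" "\<lambda>_. M" n a] assms by simp

section \<open>The integer-label identity\<close>

definition Fv :: "'a maze \<Rightarrow> 'a maze \<Rightarrow> nat list \<Rightarrow> nat list \<Rightarrow> (('a \<times> 'a) multiset \<Rightarrow>\<^sub>0 int)" where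
  "Fv P Q d e = scnt (pI P d) (pI Q e)"

definition Nt :: "'a maze \<Rightarrow> 'a maze \<Rightarrow> nat \<Rightarrow> nat \<Rightarrow> (('a \<times> 'a) multiset \<Rightarrow>\<^sub>0 int)" where
  "Nt P Q i j = tau (pe (P!i)) (pe (Q!j)) - 1"

definition cb :: "(nat \<Rightarrow> int) \<Rightarrow> nat list \<Rightarrow> int" where
  "cb a d = (\<Prod>i<length d. int_binom (a i) (d!i))"

lemma Nt_Dg1: "Nt P Q i j \<in> Dg 1"
  unfolding Nt_def tau_def by (simp add: xv_def Dg_def)

lemma tau_Nt: "tau (pe (P!i)) (pe (Q!j)) = 1 + Nt P Q i j"
  by (simp add: Nt_def)

lemma Dg1_pow: "N \<in> Dg 1 \<Longrightarrow> (1 + N) ^ k - 1 \<in> Dg 1"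
  using Dg1_prod[of "{..<k}" "\<lambda>_. N"] by simp

lemma lv_length: "d \<in> lv S m \<Longrightarrow> length d = m" by (simp add: lv_def)

lemma T_int:
  fixes P Q :: "'a maze" and a b :: "nat \<Rightarrow> int"
  shows "eqv n (\<Sum>d\<in>lv {..n} (length P). \<Sum>e\<in>lv {..n} (length Q). of_int (cb a d * cb b e) * Fv P Q d e)
       (\<Prod>i<length P. \<Prod>j<length Q. Ef n (a i * b j) (Nt P Q i j))"
proof -
  let ?m = "length P" and ?p = "length Q"
  define Y where "Y e i = (\<Prod>j<?p. (1 + Nt P Q i j) ^ (e!j))" for e i
  define G where "G e d = (\<Sum>e'\<in>le_vec e. of_nat (binv e e') * Fv P Q d e')" for e d
  define K where "K e = (\<Sum>d\<in>lv {..n} ?m. of_int (cb a d) * Fv P Q d e)" for e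
  define Zc where "Zc j = (\<Prod>i<?m. Ef n (a i) (Nt P Q i j))" for j
  have S1: "(\<Sum>d'\<in>le_vec d. of_nat (binv d d') * G e d') = (\<Prod>i<?m. Y e i ^ (d!i))"
    if dl: "length d = ?m" and el: "length e = ?p" for d e
  proof -
    have "(\<Sum>d'\<in>le_vec d. of_nat (binv d d') * G e d')
        = (\<Sum>d'\<in>le_vec d. \<Sum>e'\<in>le_vec e. of_nat (binv d d') * of_nat (binv e e') * scnt (pI P d') (pI Q e'))"
      by (simp add: G_def Fv_def sum_distrib_left mult.assoc)
    also have "\<dots> = (\<Prod>i<?m. \<Prod>j<?p. tau (pe (P!i)) (pe (Q!j)) ^ (d!i * e!j))"
      by (rule T_nat[OF dl el])
    also have "\<dots> = (\<Prod>i<?m. Y e i ^ (d!i))"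
      by (simp add: Y_def tau_Nt prod_power_distrib power_mult mult.commute[of "d!_"])
    finally show ?thesis .
  qed
  have S2: "G e d = (\<Prod>i<?m. (Y e i - 1) ^ (d!i))"
    if dl: "length d = ?m" and el: "length e = ?p" for d e
  proof -
    have "(\<lambda>d. G e d - (\<Prod>i<?m. (Y e i - 1) ^ (d!i))) d = 0"
    proof (rule exact_inversion[of ?m])
      fix d :: "nat list" assume dl: "length d = ?m"
      have "(\<Sum>d'\<in>le_vec d. of_nat (binv d d') * (\<Prod>i<?m. (Y e i - 1) ^ (d'!i)))
          = (\<Sum>d'\<in>le_vec d. of_nat (binv d d') * (\<Prod>i<length d. (Y e i - 1) ^ (d'!i)))"
        using dl by simp
      also have "\<dots> = (\<Prod>i<length d. (1 + (Y e i - 1)) ^ (d!i))"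
        by (rule binom_expand[symmetric])
      also have "\<dots> = (\<Prod>i<?m. Y e i ^ (d!i))" using dl by simp
      finally have "(\<Sum>d'\<in>le_vec d. of_nat (binv d d') * (\<Prod>i<?m. (Y e i - 1) ^ (d'!i))) = (\<Prod>i<?m. Y e i ^ (d!i))" .
      then show "(\<Sum>d'\<in>le_vec d. of_nat (binv d d') * (G e d' - (\<Prod>i<?m. (Y e i - 1) ^ (d'!i)))) = 0"
        using S1[OF dl el] by (simp add: right_diff_distrib sum_subtractf)
    qed (rule dl)
    then show ?thesis by simp
  qed
  have S3: "(\<Sum>e'\<in>le_vec e. of_nat (binv e e') * K e') = (\<Prod>i<?m. Ef n (a i) (Y e i - 1))"
    if el: "length e = ?p" for e
  proof -
    have "(\<Sum>e'\<in>le_vec e. of_nat (binv e e') * K e') = (\<Sum>d\<in>lv {..n} ?m. of_int (cb a d) * G e d)"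
      unfolding K_def G_def
      by (simp add: sum_distrib_left sum_distrib_right mult.assoc mult.left_commute[of "of_nat _"] sum.swap[of _ "le_vec e"])
    also have "\<dots> = (\<Sum>d\<in>lv {..n} ?m. \<Prod>i<?m. of_int (int_binom (a i) (d!i)) * (Y e i - 1) ^ (d!i))"
    proof (intro sum.cong refl)
      fix d assume d: "d \<in> lv {..n} ?m"
      then have dl: "length d = ?m" by (simp add: lv_def)
      show "of_int (cb a d) * G e d = (\<Prod>i<?m. of_int (int_binom (a i) (d!i)) * (Y e i - 1) ^ (d!i))"
        using dl by (simp add: S2[OF dl el] cb_def prod.distrib)
    qed
    also have "\<dots> = (\<Prod>i<?m. \<Sum>t\<in>{..n}. of_int (int_binom (a i) t) * (Y e i - 1) ^ t)"
      by (rule sum_lv_prod) simp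
    also have "\<dots> = (\<Prod>i<?m. Ef n (a i) (Y e i - 1))" by (simp add: Ef_def)
    finally show ?thesis .
  qed
  have S4: "eqv n (\<Prod>i<?m. Ef n (a i) (Y e i - 1)) (\<Prod>j<?p. Zc j ^ (e!j))" for e
  proof -
    have "eqv n (Ef n (a i) (Y e i - 1)) (\<Prod>j<?p. Ef n (a i) (Nt P Q i j) ^ (e!j))" for i
    proof -
      have y: "Y e i - 1 = (\<Prod>j<?p. 1 + ((1 + Nt P Q i j) ^ (e!j) - 1)) - 1" by (simp add: Y_def)
      have "eqv n (Ef n (a i) (Y e i - 1)) (\<Prod>j<?p. Ef n (a i) ((1 + Nt P Q i j) ^ (e!j) - 1))"
        unfolding y by (rule Ef_prod, simp, rule Dg1_pow, rule Nt_Dg1)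
      moreover have "eqv n (\<Prod>j<?p. Ef n (a i) ((1 + Nt P Q i j) ^ (e!j) - 1)) (\<Prod>j<?p. Ef n (a i) (Nt P Q i j) ^ (e!j))"
        by (intro eqv_prod Ef_pow Nt_Dg1)
      ultimately show ?thesis by (rule eqv_trans)
    qed
    then have "eqv n (\<Prod>i<?m. Ef n (a i) (Y e i - 1)) (\<Prod>i<?m. \<Prod>j<?p. Ef n (a i) (Nt P Q i j) ^ (e!j))"
      by (intro eqv_prod)
    also have "(\<Prod>i<?m. \<Prod>j<?p. Ef n (a i) (Nt P Q i j) ^ (e!j)) = (\<Prod>j<?p. Zc j ^ (e!j))"
      by (simp add: Zc_def prod_power_distrib prod.swap[of _ "{..<?m}"])
    finally show ?thesis .
  qed
  have S5: "eqv n (K e) (\<Prod>j<?p. (Zc j - 1) ^ (e!j))" if el: "length e = ?p" for e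
  proof -
    have "(\<lambda>e. K e - (\<Prod>j<?p. (Zc j - 1) ^ (e!j))) e \<in> Zs n"
    proof (rule Zs_inversion[of ?p])
      fix e :: "nat list" assume el: "length e = ?p"
      have "(\<Sum>e'\<in>le_vec e. of_nat (binv e e') * (\<Prod>j<?p. (Zc j - 1) ^ (e'!j)))
          = (\<Sum>e'\<in>le_vec e. of_nat (binv e e') * (\<Prod>j<length e. (Zc j - 1) ^ (e'!j)))"
        using el by simp
      also have "\<dots> = (\<Prod>j<length e. (1 + (Zc j - 1)) ^ (e!j))"
        by (rule binom_expand[symmetric])
      also have "\<dots> = (\<Prod>j<?p. Zc j ^ (e!j))" using el by simp
      finally have b: "(\<Sum>e'\<in>le_vec e. of_nat (binv e e') * (\<Prod>j<?p. (Zc j - 1) ^ (e'!j))) = (\<Prod>j<?p. Zc j ^ (e!j))" .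
      have "(\<Sum>e'\<in>le_vec e. of_nat (binv e e') * (K e' - (\<Prod>j<?p. (Zc j - 1) ^ (e'!j))))
          = (\<Prod>i<?m. Ef n (a i) (Y e i - 1)) - (\<Prod>j<?p. Zc j ^ (e!j))"
        using S3[OF el] b by (simp add: right_diff_distrib sum_subtractf)
      then show "(\<Sum>e'\<in>le_vec e. of_nat (binv e e') * (K e' - (\<Prod>j<?p. (Zc j - 1) ^ (e'!j)))) \<in> Zs n"
        using S4[of e] by (simp add: eqv_def)
    qed (rule el)
    then show ?thesis by (simp add: eqv_def)
  qed
  have "(\<Sum>d\<in>lv {..n} ?m. \<Sum>e\<in>lv {..n} ?p. of_int (cb a d * cb b e) * Fv P Q d e)
      = (\<Sum>e\<in>lv {..n} ?p. of_int (cb b e) * K e)"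
    unfolding K_def
    by (simp add: sum_distrib_left mult.assoc mult.left_commute[of "of_int (cb b _)"] sum.swap[of _ "lv {..n} ?m"])
  moreover have "eqv n (\<Sum>e\<in>lv {..n} ?p. of_int (cb b e) * K e) (\<Sum>e\<in>lv {..n} ?p. of_int (cb b e) * (\<Prod>j<?p. (Zc j - 1) ^ (e!j)))"
    by (intro eqv_sum eqv_mult eqv_refl S5) (simp add: lv_def)
  moreover have "(\<Sum>e\<in>lv {..n} ?p. of_int (cb b e) * (\<Prod>j<?p. (Zc j - 1) ^ (e!j))) = (\<Prod>j<?p. Ef n (b j) (Zc j - 1))"
  proof -
    have "(\<Sum>e\<in>lv {..n} ?p. of_int (cb b e) * (\<Prod>j<?p. (Zc j - 1) ^ (e!j)))
        = (\<Sum>e\<in>lv {..n} ?p. \<Prod>j<?p. of_int (int_binom (b j) (e!j)) * (Zc j - 1) ^ (e!j))"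
      by (intro sum.cong refl) (simp add: cb_def prod.distrib lv_def)
    also have "\<dots> = (\<Prod>j<?p. \<Sum>t\<in>{..n}. of_int (int_binom (b j) t) * (Zc j - 1) ^ t)"
      by (rule sum_lv_prod) simp
    finally show ?thesis by (simp add: Ef_def)
  qed
  moreover have "eqv n (\<Prod>j<?p. Ef n (b j) (Zc j - 1)) (\<Prod>j<?p. \<Prod>i<?m. Ef n (b j) (Ef n (a i) (Nt P Q i j) - 1))"
  proof (intro eqv_prod)
    fix j
    have z: "Zc j - 1 = (\<Prod>i<?m. 1 + (Ef n (a i) (Nt P Q i j) - 1)) - 1" by (simp add: Zc_def)
    show "eqv n (Ef n (b j) (Zc j - 1)) (\<Prod>i<?m. Ef n (b j) (Ef n (a i) (Nt P Q i j) - 1))"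
      unfolding z by (rule Ef_prod, simp, rule Ef_Dg1, rule Nt_Dg1)
  qed
  moreover have "eqv n (\<Prod>j<?p. \<Prod>i<?m. Ef n (b j) (Ef n (a i) (Nt P Q i j) - 1)) (\<Prod>j<?p. \<Prod>i<?m. Ef n (b j * a i) (Nt P Q i j))"
    by (intro eqv_prod Ef_comp Nt_Dg1)
  moreover have "(\<Prod>j<?p. \<Prod>i<?m. Ef n (b j * a i) (Nt P Q i j)) = (\<Prod>i<?m. \<Prod>j<?p. Ef n (b j * a i) (Nt P Q i j))"
    by (rule prod.swap)
  moreover have "(\<Prod>i<?m. \<Prod>j<?p. Ef n (b j * a i) (Nt P Q i j)) = (\<Prod>i<?m. \<Prod>j<?p. Ef n (a i * b j) (Nt P Q i j))"
    by (intro prod.cong refl) (simp add: mult.commute)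
  ultimately show ?thesis by (metis (no_types, lifting) eqv_trans)
qed

section \<open>Moebius inversion over pairs of sets\<close>

lemma moebius2:
  fixes X :: "'i set \<Rightarrow> 'j set \<Rightarrow> 'r::comm_ring_1"
  assumes S0: "0 \<in> S" and Sd: "\<And>x y. x \<in> S \<Longrightarrow> y \<in> S \<Longrightarrow> x - y \<in> S"
    and fin: "finite I0" "finite J0"
    and T: "\<And>I J. I \<subseteq> I0 \<Longrightarrow> J \<subseteq> J0 \<Longrightarrow> (\<Sum>I'\<in>Pow I. \<Sum>J'\<in>Pow J. X I' J') \<in> S"
  shows "X I0 J0 \<in> S"
proof -
  have Sa: "x \<in> S \<Longrightarrow> y \<in> S \<Longrightarrow> x + y \<in> S" for x y
    using Sd[of 0 y] Sd[of x "0 - y"] S0 by simp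
  have Ss: "finite A \<Longrightarrow> (\<And>i. i \<in> A \<Longrightarrow> f i \<in> S) \<Longrightarrow> sum f A \<in> S" for f and A :: "('i set \<times> 'j set) set"
    by (induction A rule: finite_induct) (auto simp: S0 Sa)
  have main: "\<forall>I J. I \<subseteq> I0 \<longrightarrow> J \<subseteq> J0 \<longrightarrow> card I + card J = k \<longrightarrow> X I J \<in> S" for k
  proof (induction k rule: less_induct)
    case (less k)
    show ?case
    proof (intro allI impI)
      fix I J assume IJ: "I \<subseteq> I0" "J \<subseteq> J0" "card I + card J = k"
      have fI: "finite I" using IJ fin finite_subset by blast
      have fJ: "finite J" using IJ fin finite_subset by blast
      have fP: "finite (Pow I \<times> Pow J)" using fI fJ by simp
      have "(\<Sum>I'\<in>Pow I. \<Sum>J'\<in>Pow J. X I' J') = (\<Sum>p\<in>Pow I \<times> Pow J. X (fst p) (snd p))"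
        by (simp add: sum.cartesian_product case_prod_beta)
      also have "\<dots> = X I J + (\<Sum>p\<in>Pow I \<times> Pow J - {(I,J)}. X (fst p) (snd p))"
        by (subst sum.remove[OF fP, of "(I,J)"]) auto
      finally have e: "X I J = (\<Sum>I'\<in>Pow I. \<Sum>J'\<in>Pow J. X I' J') - (\<Sum>p\<in>Pow I \<times> Pow J - {(I,J)}. X (fst p) (snd p))"
        by simp
      have "(\<Sum>p\<in>Pow I \<times> Pow J - {(I,J)}. X (fst p) (snd p)) \<in> S"
      proof (rule Ss)
        show "finite (Pow I \<times> Pow J - {(I,J)})" using fP by simp
        fix p assume p: "p \<in> Pow I \<times> Pow J - {(I,J)}"
        obtain I' J' where pp: "p = (I', J')" by (cases p)
        have sub: "I' \<subseteq> I" "J' \<subseteq> J" "(I',J') \<noteq> (I,J)" using p pp by auto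
        have c1: "card I' \<le> card I" "card J' \<le> card J" using sub fI fJ by (auto intro: card_mono)
        have "card I' < card I \<or> card J' < card J"
        proof (rule ccontr)
          assume "\<not> (card I' < card I \<or> card J' < card J)"
          then have "card I' = card I" "card J' = card J" using c1 by auto
          then have "I' = I" "J' = J" using sub fI fJ card_subset_eq by metis+
          then show False using sub by simp
        qed
        then have "card I' + card J' < k" using c1 IJ by auto
        then show "X (fst p) (snd p) \<in> S" using less sub IJ pp by auto
      qed
      then show "X I J \<in> S" using e Sd T[OF IJ(1,2)] by simp
    qed
  qed
  show ?thesis using main[of "card I0 + card J0"] by simp
qed

definition supp :: "nat list \<Rightarrow> nat set" where "supp d = {i. i < length d \<and> d!i \<noteq> 0}"

lemma cb_zero:
  "cb (\<lambda>i. if i \<in> I then a i else 0) d = (if supp d \<subseteq> I then cb a d else 0)"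
proof (cases "supp d \<subseteq> I")
  case True
  then have "cb (\<lambda>i. if i \<in> I then a i else 0) d = cb a d"
    unfolding cb_def by (intro prod.cong refl) (use True in \<open>auto simp: supp_def\<close>, metis (mono_tags, lifting) ib_0 mem_Collect_eq neq0_conv subsetD)
  then show ?thesis using True by simp
next
  case False
  then obtain i where i: "i < length d" "d!i \<noteq> 0" "i \<notin> I" by (auto simp: supp_def)
  have "cb (\<lambda>i. if i \<in> I then a i else 0) d = 0"
    unfolding cb_def by (rule prod_zero) (use i in \<open>auto intro!: bexI[of _ i] simp: ib_zero\<close>)
  then show ?thesis using False by simp
qed

lemma sum_supp_group:
  assumes "finite A" "I \<subseteq> {..<m}" "\<And>d. d \<in> A \<Longrightarrow> length d = m"
  shows "(\<Sum>d\<in>A. if supp d \<subseteq> I then x d else 0) = (\<Sum>I'\<in>Pow I. \<Sum>d\<in>{d\<in>A. supp d = I'}. x d)"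
proof -
  have "(\<Sum>d\<in>A. if supp d \<subseteq> I then x d else 0) = (\<Sum>d\<in>{d\<in>A. supp d \<subseteq> I}. x d)"
    by (simp add: sum.inter_filter assms)
  also have "\<dots> = (\<Sum>I'\<in>Pow I. \<Sum>d\<in>{d\<in>{d\<in>A. supp d \<subseteq> I}. supp d = I'}. x d)"
    by (rule sum.group[symmetric]) (use assms finite_subset in auto)
  also have "\<dots> = (\<Sum>I'\<in>Pow I. \<Sum>d\<in>{d\<in>A. supp d = I'}. x d)"
    by (intro sum.cong refl) auto
  finally show ?thesis .
qed

lemma pairings_finite: "finite (maze_pairings P Q)"
  by (rule finite_subset[of _ "Pow ({..<length P} \<times> {..<length Q})"]) (auto simp: maze_pairings_def)

lemma Psi_lcg:
  "Psi n (laby_comp_gen P Q) = (\<Sum>U\<in>maze_pairings P Q.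
     \<Prod>w\<in>U. Ef n (plab (P!fst w) * plab (Q!snd w)) (Nt P Q (fst w) (snd w)) - 1)"
proof -
  have "Psi n (laby_comp_gen P Q) = (\<Sum>U\<in>maze_pairings P Q.
      psig n (map (\<lambda>(i,j). (psrc (Q!j), plab (P!i) * plab (Q!j), ptgt (P!i))) (sorted_list_of_set U)))"
    unfolding laby_comp_gen_def Psi_def by (simp add: frag_extend_sum pairings_finite o_def)
  also have "\<dots> = (\<Sum>U\<in>maze_pairings P Q.
     \<Prod>w\<in>U. Ef n (plab (P!fst w) * plab (Q!snd w)) (Nt P Q (fst w) (snd w)) - 1)"
  proof (intro sum.cong refl)
    fix U assume U: "U \<in> maze_pairings P Q"
    have fU: "finite U"
    proof (rule finite_subset)
      show "U \<subseteq> {..<length P} \<times> {..<length Q}" using U by (auto simp: maze_pairings_def)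
    qed simp
    define c where "c = (\<lambda>(i,j). (psrc (Q!j), plab (P!i) * plab (Q!j), ptgt (P!i)))"
    define \<phi> where "\<phi> = (\<lambda>p::'a \<times> int \<times> 'a. Ef n (plab p) (xv (pe p)) - 1)"
    have "psig n (map c (sorted_list_of_set U)) = prod_mset (image_mset \<phi> (mset (map c (sorted_list_of_set U))))"
      unfolding psig_prod \<phi>_def by (rule prod_nth_mset)
    also have "\<dots> = prod_mset (image_mset (\<phi> \<circ> c) (mset_set U))"
      by (simp add: mset_map mset_sorted_set multiset.map_comp)
    also have "\<dots> = prod (\<phi> \<circ> c) U" by (simp only: prod_unfold_prod_mset)
    also have "\<dots> = (\<Prod>w\<in>U. Ef n (plab (P!fst w) * plab (Q!snd w)) (Nt P Q (fst w) (snd w)) - 1)"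
    proof (intro prod.cong refl)
      fix w assume w: "w \<in> U"
      then have "psrc (P!fst w) = ptgt (Q!snd w)" using U by (auto simp: maze_pairings_def)
      then show "(\<phi> \<circ> c) w = Ef n (plab (P!fst w) * plab (Q!snd w)) (Nt P Q (fst w) (snd w)) - 1"
        by (simp add: \<phi>_def c_def case_prod_beta Nt_def tau_def pe_def plab_def psrc_def ptgt_def)
    qed
    finally show "psig n (map (\<lambda>(i,j). (psrc (Q!j), plab (P!i) * plab (Q!j), ptgt (P!i))) (sorted_list_of_set U))
        = (\<Prod>w\<in>U. Ef n (plab (P!fst w) * plab (Q!snd w)) (Nt P Q (fst w) (snd w)) - 1)"
      unfolding c_def .
  qed
  finally show ?thesis .
qed

lemma Nt_noncomp: "psrc (P!i) \<noteq> ptgt (Q!j) \<Longrightarrow> Nt P Q i j = 0"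
  by (simp add: Nt_def tau_def pe_def)

lemma R_zero:
  fixes F :: "nat list \<Rightarrow> nat list \<Rightarrow> 'r::comm_ring_1"
  assumes A: "finite A" "\<And>d. d \<in> A \<Longrightarrow> length d = m" and B: "finite B" "\<And>e. e \<in> B \<Longrightarrow> length e = p"
    and I: "I \<subseteq> {..<m}" and J: "J \<subseteq> {..<p}"
  shows "(\<Sum>d\<in>A. \<Sum>e\<in>B. of_int (cb (\<lambda>i. if i \<in> I then a i else 0) d * cb (\<lambda>j. if j \<in> J then b j else 0) e) * F d e)
    = (\<Sum>I'\<in>Pow I. \<Sum>J'\<in>Pow J. \<Sum>d\<in>{d\<in>A. supp d = I'}. \<Sum>e\<in>{e\<in>B. supp e = J'}. of_int (cb a d * cb b e) * F d e)"
proof -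
  have "(\<Sum>d\<in>A. \<Sum>e\<in>B. of_int (cb (\<lambda>i. if i \<in> I then a i else 0) d * cb (\<lambda>j. if j \<in> J then b j else 0) e) * F d e)
      = (\<Sum>d\<in>A. if supp d \<subseteq> I then (\<Sum>e\<in>B. if supp e \<subseteq> J then of_int (cb a d * cb b e) * F d e else 0) else 0)"
    by (intro sum.cong refl) (auto simp: cb_zero intro!: sum.cong)
  also have "\<dots> = (\<Sum>d\<in>A. if supp d \<subseteq> I then (\<Sum>J'\<in>Pow J. \<Sum>e\<in>{e\<in>B. supp e = J'}. of_int (cb a d * cb b e) * F d e) else 0)"
    by (intro sum.cong refl if_cong sum_supp_group[OF B(1) J]) (auto intro: B(2))
  also have "\<dots> = (\<Sum>I'\<in>Pow I. \<Sum>d\<in>{d\<in>A. supp d = I'}. \<Sum>J'\<in>Pow J. \<Sum>e\<in>{e\<in>B. supp e = J'}. of_int (cb a d * cb b e) * F d e)"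
    by (rule sum_supp_group[OF A(1) I]) (rule A(2))
  also have "\<dots> = (\<Sum>I'\<in>Pow I. \<Sum>J'\<in>Pow J. \<Sum>d\<in>{d\<in>A. supp d = I'}. \<Sum>e\<in>{e\<in>B. supp e = J'}. of_int (cb a d * cb b e) * F d e)"
    by (intro sum.cong refl sum.swap)
  finally show ?thesis .
qed

lemma star:
  fixes P Q :: "'a maze"
  shows "eqv n (Psi n (laby_comp_gen P Q))
     (\<Sum>d\<in>mult_vectors n P. \<Sum>e\<in>mult_vectors n Q. of_int (coef P d * coef Q e) * scnt (pI P d) (pI Q e))"
proof -
  let ?m = "length P" and ?p = "length Q"
  define a where "a i = plab (P!i)" for i
  define b where "b j = plab (Q!j)" for j
  define gg where "gg a b w = Ef n (a (fst w) * b (snd w)) (Nt P Q (fst w) (snd w)) - 1"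
    for a b :: "nat \<Rightarrow> int" and w
  define fX where "fX I' J' = (\<Sum>d\<in>{d\<in>lv {..n} ?m. supp d = I'}. \<Sum>e\<in>{e\<in>lv {..n} ?p. supp e = J'}.
      of_int (cb a d * cb b e) * Fv P Q d e)" for I' J'
  define hX where "hX I' J' = (\<Sum>U\<in>{U\<in>Pow ({..<?m} \<times> {..<?p}). fst ` U = I' \<and> snd ` U = J'}. \<Prod>w\<in>U. gg a b w)"
    for I' J'
  have key: "(\<Sum>I'\<in>Pow I. \<Sum>J'\<in>Pow J. fX I' J' - hX I' J') \<in> Zs n"
    if I: "I \<subseteq> {..<?m}" and J: "J \<subseteq> {..<?p}" for I J
  proof -
    define aI where "aI i = (if i \<in> I then a i else 0)" for i
    define bJ where "bJ j = (if j \<in> J then b j else 0)" for j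
    have i: "(\<Sum>d\<in>lv {..n} ?m. \<Sum>e\<in>lv {..n} ?p. of_int (cb aI d * cb bJ e) * Fv P Q d e)
        = (\<Sum>I'\<in>Pow I. \<Sum>J'\<in>Pow J. fX I' J')"
      unfolding aI_def bJ_def fX_def
      by (rule R_zero) (use I J in \<open>auto simp: lv_finite lv_length\<close>)
    have ggz: "gg aI bJ w = (if w \<in> I \<times> J then gg a b w else 0)" for w
      by (cases w) (auto simp: gg_def aI_def bJ_def)
    have "(\<Prod>i<?m. \<Prod>j<?p. Ef n (aI i * bJ j) (Nt P Q i j)) = (\<Prod>w\<in>{..<?m} \<times> {..<?p}. gg aI bJ w + 1)"
      by (simp add: prod.cartesian_product gg_def case_prod_beta)
    also have "\<dots> = (\<Sum>U\<in>Pow ({..<?m} \<times> {..<?p}). prod (gg aI bJ) U * prod (\<lambda>w. 1) ({..<?m} \<times> {..<?p} - U))"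
      by (rule prod_add) simp
    also have "\<dots> = (\<Sum>U\<in>Pow ({..<?m} \<times> {..<?p}). if U \<subseteq> I \<times> J then prod (gg a b) U else 0)"
    proof (intro sum.cong refl)
      fix U assume "U \<in> Pow ({..<?m} \<times> {..<?p})"
      show "prod (gg aI bJ) U * prod (\<lambda>w. 1) ({..<?m} \<times> {..<?p} - U) = (if U \<subseteq> I \<times> J then prod (gg a b) U else 0)"
      proof (cases "U \<subseteq> I \<times> J")
        case True
        then have "prod (gg aI bJ) U = prod (gg a b) U" by (intro prod.cong refl) (auto simp: ggz)
        then show ?thesis using True by simp
      next
        case False
        then obtain w where "w \<in> U" "w \<notin> I \<times> J" by auto
        then have "prod (gg aI bJ) U = 0" using \<open>U \<in> _\<close>
          by (intro prod_zero) (auto simp: ggz intro: finite_subset[of U "{..<?m} \<times> {..<?p}"])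
        then show ?thesis using False by simp
      qed
    qed
    also have "\<dots> = (\<Sum>U\<in>{U\<in>Pow ({..<?m} \<times> {..<?p}). U \<subseteq> I \<times> J}. prod (gg a b) U)"
      by (rule sum.inter_filter[symmetric]) simp
    also have "\<dots> = (\<Sum>y\<in>Pow I \<times> Pow J. \<Sum>U\<in>{U\<in>{U\<in>Pow ({..<?m} \<times> {..<?p}). U \<subseteq> I \<times> J}. (fst ` U, snd ` U) = y}. prod (gg a b) U)"
      using finite_subset[OF I] finite_subset[OF J]
      by (intro sum.group[symmetric]) auto
    also have "\<dots> = (\<Sum>y\<in>Pow I \<times> Pow J. hX (fst y) (snd y))"
    proof -
      have setq: "{U\<in>{U\<in>Pow ({..<?m} \<times> {..<?p}). U \<subseteq> I \<times> J}. (fst ` U, snd ` U) = y}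
          = {U\<in>Pow ({..<?m} \<times> {..<?p}). fst ` U = fst y \<and> snd ` U = snd y}" if y: "y \<in> Pow I \<times> Pow J" for y
        using y by (cases y) (auto; force)
      show ?thesis unfolding hX_def
      proof (rule sum.cong[OF refl])
        fix y assume y: "y \<in> Pow I \<times> Pow J"
        show "sum (prod (gg a b)) {U\<in>{U\<in>Pow ({..<?m} \<times> {..<?p}). U \<subseteq> I \<times> J}. (fst ` U, snd ` U) = y}
          = (\<Sum>U\<in>{U\<in>Pow ({..<?m} \<times> {..<?p}). fst ` U = fst y \<and> snd ` U = snd y}. prod (gg a b) U)"
          by (subst setq[OF y]) (rule refl)
      qed
    qed
    also have "\<dots> = (\<Sum>I'\<in>Pow I. \<Sum>J'\<in>Pow J. hX I' J')"
      by (simp add: sum.cartesian_product case_prod_beta)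
    finally have ii: "(\<Prod>i<?m. \<Prod>j<?p. Ef n (aI i * bJ j) (Nt P Q i j)) = (\<Sum>I'\<in>Pow I. \<Sum>J'\<in>Pow J. hX I' J')" .
    have "eqv n (\<Sum>I'\<in>Pow I. \<Sum>J'\<in>Pow J. fX I' J') (\<Sum>I'\<in>Pow I. \<Sum>J'\<in>Pow J. hX I' J')"
      using T_int[where P=P and Q=Q and a=aI and b=bJ and n=n] i ii by simp
    then show ?thesis by (simp add: eqv_def sum_subtractf)
  qed
  have "fX {..<?m} {..<?p} - hX {..<?m} {..<?p} \<in> Zs n"
    using key unfolding Zs_def by (intro moebius2[where X="\<lambda>I J. fX I J - hX I J"]) (auto intro: Dg_diff)
  moreover have "fX {..<?m} {..<?p} = (\<Sum>d\<in>mult_vectors n P. \<Sum>e\<in>mult_vectors n Q. of_int (coef P d * coef Q e) * scnt (pI P d) (pI Q e))"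
  proof -
    have mv: "{d\<in>lv {..n} k. supp d = {..<k}} = lv {1..n} k" for k
    proof (intro set_eqI iffI)
      fix d assume "d \<in> {d\<in>lv {..n} k. supp d = {..<k}}"
      then have l: "length d = k" and s: "set d \<subseteq> {..n}" and sp: "supp d = {..<k}" by (auto simp: lv_def)
      show "d \<in> lv {1..n} k" unfolding lv_def
      proof (intro CollectI conjI l subsetI)
        fix x assume "x \<in> set d"
        then obtain i where i: "i < length d" "d!i = x" by (auto simp: in_set_conv_nth)
        then have "i \<in> supp d" using sp l by auto
        then have "x \<noteq> 0" using i by (simp add: supp_def)
        moreover have "x \<le> n" using s \<open>x \<in> set d\<close> by auto
        ultimately show "x \<in> {1..n}" by simp
      qed
    next
      fix d assume "d \<in> lv {1..n} k"
      then have l: "length d = k" and s: "set d \<subseteq> {1..n}" by (auto simp: lv_def)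
      have "supp d = {..<k}"
      proof (intro set_eqI iffI)
        fix i assume "i \<in> {..<k}"
        then have "d!i \<in> set d" using l by simp
        then have "d!i \<noteq> 0" using s by fastforce
        then show "i \<in> supp d" using \<open>i \<in> {..<k}\<close> l by (simp add: supp_def)
      qed (use l in \<open>auto simp: supp_def\<close>)
      moreover have "set d \<subseteq> {..n}" using s by auto
      ultimately show "d \<in> {d\<in>lv {..n} k. supp d = {..<k}}" using l by (simp add: lv_def)
    qed
    show ?thesis unfolding fX_def mv mv_lv
      by (intro sum.cong refl) (auto simp: cb_def coef_def a_def b_def lv_def Fv_def)
  qed
  moreover have "hX {..<?m} {..<?p} = Psi n (laby_comp_gen P Q)"
  proof -
    have "hX {..<?m} {..<?p} = (\<Sum>U\<in>maze_pairings P Q. \<Prod>w\<in>U. gg a b w)"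
      unfolding hX_def
    proof (rule sum.mono_neutral_right)
      show "finite {U \<in> Pow ({..<?m} \<times> {..<?p}). fst ` U = {..<?m} \<and> snd ` U = {..<?p}}" by simp
      show "maze_pairings P Q \<subseteq> {U \<in> Pow ({..<?m} \<times> {..<?p}). fst ` U = {..<?m} \<and> snd ` U = {..<?p}}"
        by (auto simp: maze_pairings_def)
      show "\<forall>U\<in>{U \<in> Pow ({..<?m} \<times> {..<?p}). fst ` U = {..<?m} \<and> snd ` U = {..<?p}} - maze_pairings P Q.
          (\<Prod>w\<in>U. gg a b w) = 0"
      proof
        fix U assume U: "U \<in> {U \<in> Pow ({..<?m} \<times> {..<?p}). fst ` U = {..<?m} \<and> snd ` U = {..<?p}} - maze_pairings P Q"
        then have "\<not> U \<subseteq> {(i,j). i < ?m \<and> j < ?p \<and> psrc (P!i) = ptgt (Q!j)}"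
          by (auto simp: maze_pairings_def)
        moreover have "U \<subseteq> {..<?m} \<times> {..<?p}" using U by auto
        ultimately obtain w where w: "w \<in> U" "psrc (P!fst w) \<noteq> ptgt (Q!snd w)"
          by fastforce
        have "gg a b w = 0" using w(2) by (simp add: gg_def Nt_noncomp)
        moreover have "finite U" using U by (auto intro: finite_subset[of U "{..<?m} \<times> {..<?p}"])
        ultimately show "(\<Prod>w\<in>U. gg a b w) = 0" using w(1) by (intro prod_zero) auto
      qed
    qed
    also have "\<dots> = Psi n (laby_comp_gen P Q)"
      by (simp add: Psi_lcg gg_def a_def b_def)
    finally show ?thesis .
  qed
  ultimately show ?thesis using eqv_sym by (simp add: eqv_def)
qed

section \<open>Psi kills the Laby ideal\<close>

lemma eqv_Zs_trans: "eqv n A B \<Longrightarrow> B \<in> Zs n \<Longrightarrow> A \<in> Zs n"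
  unfolding eqv_def Zs_def using Dg_add by fastforce

lemma frag_extend_frag_extend:
  "frag_extend f (frag_extend h x) = frag_extend (\<lambda>q. frag_extend f (h q)) x"
  using subset_UNIV
  by (induction x rule: frag_induction) (auto simp: frag_extend_diff)

lemma frag_extend_eqv:
  assumes "\<And>q. q \<in> Poly_Mapping.keys x \<Longrightarrow> eqv n (f q) (g q)"
  shows "eqv n (frag_extend f x) (frag_extend g x)"
  unfolding frag_extend_def using assms by (intro eqv_sum eqv_cmul) auto

lemma frag_extend_Zs:
  assumes "y \<in> Zs n" "\<And>M. n < size M \<Longrightarrow> G M \<in> Zs n"
  shows "frag_extend G y \<in> Zs n"
  unfolding frag_extend_def Zs_def
proof (intro Dg_sum Dg_cmul)
  fix M assume "M \<in> Poly_Mapping.keys y"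
  then have "n < size M" using assms(1) by (auto simp: Zs_def Dg_def)
  then show "G M \<in> Dg (Suc n)" using assms(2) by (simp add: Zs_def)
qed

lemma scnt_Zs_u: "n < length u \<Longrightarrow> scnt v u \<in> Zs n"
  unfolding scnt_def Zs_def
proof (intro Dg_sum Dg_frag_of)
  fix W assume W: "W \<in> weak_pullbacks v u" and nu: "n < length u"
  have fW: "finite W"
    by (rule finite_subset[of _ "{..<length v} \<times> {..<length u}"]) (use W in \<open>auto simp: weak_pullbacks_def\<close>)
  have "length u = card (snd ` W)" using W by (simp add: weak_pullbacks_def)
  also have "\<dots> \<le> card W" by (rule card_image_le[OF fW])
  finally show "Suc n \<le> size (image_mset (rho v u) (mset_set W))" using nu by simp
qed

lemma scnt_Zs_v: "n < length v \<Longrightarrow> scnt v u \<in> Zs n"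
  unfolding scnt_def Zs_def
proof (intro Dg_sum Dg_frag_of)
  fix W assume W: "W \<in> weak_pullbacks v u" and nv: "n < length v"
  have fW: "finite W"
    by (rule finite_subset[of _ "{..<length v} \<times> {..<length u}"]) (use W in \<open>auto simp: weak_pullbacks_def\<close>)
  have "length v = card (fst ` W)" using W by (simp add: weak_pullbacks_def)
  also have "\<dots> \<le> card W" by (rule card_image_le[OF fW])
  finally show "Suc n \<le> size (image_mset (rho v u) (mset_set W))" using nv by simp
qed

lemma psig_frag: "psig n q = (\<Sum>e\<in>mult_vectors n q. frag_cmul (coef q e) (frag_of (mset (pI q e))))"
  by (simp add: psig_def pI_def)

lemma Psi_left:
  assumes x: "Psi n x \<in> Zs n"
  shows "Psi n (laby_comp (frag_of g) x) \<in> Zs n"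
proof -
  define Gg where "Gg M = (\<Sum>d\<in>mult_vectors n g. of_int (coef g d) * scnt' (mset (pI g d)) M)" for M
  have lc: "laby_comp (frag_of g) x = frag_extend (laby_comp_gen g) x"
    by (simp add: laby_comp_def bilin_def)
  have "eqv n (Psi n (laby_comp_gen g q)) (frag_extend Gg (psig n q))" for q
  proof -
    have "eqv n (Psi n (laby_comp_gen g q))
       (\<Sum>d\<in>mult_vectors n g. \<Sum>e\<in>mult_vectors n q. of_int (coef g d * coef q e) * scnt (pI g d) (pI q e))"
      by (rule star)
    also have "(\<Sum>d\<in>mult_vectors n g. \<Sum>e\<in>mult_vectors n q. of_int (coef g d * coef q e) * scnt (pI g d) (pI q e))
        = frag_extend Gg (psig n q)"
    proof -
      have "frag_extend Gg (psig n q) = (\<Sum>e\<in>mult_vectors n q. of_int (coef q e) * Gg (mset (pI q e)))"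
        unfolding psig_frag by (simp add: frag_extend_sum mv_finite frag_extend_cmul o_def frag_cmul_of_int[symmetric])
      also have "\<dots> = (\<Sum>d\<in>mult_vectors n g. \<Sum>e\<in>mult_vectors n q. of_int (coef g d * coef q e) * scnt (pI g d) (pI q e))"
        unfolding Gg_def
        by (simp add: sum_distrib_left scnt_scnt' sum.swap[of _ "mult_vectors n q"] algebra_simps)
      finally show ?thesis by simp
    qed
    finally show ?thesis .
  qed
  then have "eqv n (Psi n (laby_comp (frag_of g) x)) (frag_extend (\<lambda>q. frag_extend Gg (psig n q)) x)"
    unfolding lc Psi_def frag_extend_frag_extend by (intro frag_extend_eqv) (simp add: Psi_def)
  moreover have "frag_extend (\<lambda>q. frag_extend Gg (psig n q)) x = frag_extend Gg (Psi n x)"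
    by (simp add: Psi_def frag_extend_frag_extend)
  moreover have "frag_extend Gg (Psi n x) \<in> Zs n"
  proof (rule frag_extend_Zs[OF x])
    fix M :: "('a \<times> 'a) multiset" assume "n < size M"
    then have "n < length (lst M)" by (metis mset_lst size_mset)
    then show "Gg M \<in> Zs n" unfolding Gg_def scnt'_def Zs_def
      by (intro Dg_sum Dg_mult_left) (use scnt_Zs_u in \<open>auto simp: Zs_def\<close>)
  qed
  ultimately show ?thesis by (metis eqv_Zs_trans)
qed

lemma Psi_right:
  assumes x: "Psi n x \<in> Zs n"
  shows "Psi n (laby_comp x (frag_of g)) \<in> Zs n"
proof -
  define Hg where "Hg M = (\<Sum>e\<in>mult_vectors n g. of_int (coef g e) * scnt' M (mset (pI g e)))" for M
  have lc: "laby_comp x (frag_of g) = frag_extend (\<lambda>p. laby_comp_gen p g) x"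
    by (simp add: laby_comp_def bilin_def)
  have "eqv n (Psi n (laby_comp_gen p g)) (frag_extend Hg (psig n p))" for p
  proof -
    have "eqv n (Psi n (laby_comp_gen p g))
       (\<Sum>d\<in>mult_vectors n p. \<Sum>e\<in>mult_vectors n g. of_int (coef p d * coef g e) * scnt (pI p d) (pI g e))"
      by (rule star)
    also have "(\<Sum>d\<in>mult_vectors n p. \<Sum>e\<in>mult_vectors n g. of_int (coef p d * coef g e) * scnt (pI p d) (pI g e))
        = frag_extend Hg (psig n p)"
    proof -
      have "frag_extend Hg (psig n p) = (\<Sum>d\<in>mult_vectors n p. of_int (coef p d) * Hg (mset (pI p d)))"
        unfolding psig_frag by (simp add: frag_extend_sum mv_finite frag_extend_cmul o_def frag_cmul_of_int[symmetric])
      also have "\<dots> = (\<Sum>d\<in>mult_vectors n p. \<Sum>e\<in>mult_vectors n g. of_int (coef p d * coef g e) * scnt (pI p d) (pI g e))"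
        unfolding Hg_def
        by (simp add: sum_distrib_left scnt_scnt' algebra_simps)
      finally show ?thesis by simp
    qed
    finally show ?thesis .
  qed
  then have "eqv n (Psi n (laby_comp x (frag_of g))) (frag_extend (\<lambda>p. frag_extend Hg (psig n p)) x)"
    unfolding lc Psi_def frag_extend_frag_extend by (intro frag_extend_eqv) (simp add: Psi_def)
  moreover have "frag_extend (\<lambda>p. frag_extend Hg (psig n p)) x = frag_extend Hg (Psi n x)"
    by (simp add: Psi_def frag_extend_frag_extend)
  moreover have "frag_extend Hg (Psi n x) \<in> Zs n"
  proof (rule frag_extend_Zs[OF x])
    fix M :: "('a \<times> 'a) multiset" assume "n < size M"
    then have "n < length (lst M)" by (metis mset_lst size_mset)
    then show "Hg M \<in> Zs n" unfolding Hg_def scnt'_def Zs_def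
      by (intro Dg_sum Dg_mult_left) (use scnt_Zs_v in \<open>auto simp: Zs_def\<close>)
  qed
  ultimately show ?thesis by (metis eqv_Zs_trans)
qed

lemma Zs_0 [simp]: "0 \<in> Zs n" by (simp add: Zs_def)
lemma Zs_diff: "x \<in> Zs n \<Longrightarrow> y \<in> Zs n \<Longrightarrow> x - y \<in> Zs n" by (simp add: Zs_def Dg_diff)

definition phi :: "nat \<Rightarrow> 'a \<times> int \<times> 'a \<Rightarrow> (('a \<times> 'a) multiset \<Rightarrow>\<^sub>0 int)" where
  "phi n p = Ef n (plab p) (xv (pe p)) - 1"

lemma psig_list: "psig n P = prod_mset (image_mset (phi n) (mset P))"
  unfolding psig_prod phi_def by (rule prod_nth_mset)

lemma mset_nth_conv: "mset xs = image_mset (nth xs) (mset_set {..<length xs})"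
  by (metis map_nth mset_map mset_set_upto_eq_mset_upto)

lemma maze_perm_mset: "maze_perm P P' \<Longrightarrow> mset P = mset P'"
proof -
  assume "maze_perm P P'"
  then obtain \<pi> where l: "length P = length P'" and b: "bij_betw \<pi> {..<length P} {..<length P'}"
    and e: "\<forall>i<length P. P' ! (\<pi> i) = P ! i" by (auto simp: maze_perm_def)
  have "mset P' = image_mset (nth P') (mset_set (\<pi> ` {..<length P}))"
    using b by (simp add: mset_nth_conv bij_betw_def)
  also have "\<dots> = image_mset (nth P') (image_mset \<pi> (mset_set {..<length P}))"
    using b by (simp add: image_mset_mset_set bij_betw_def)
  also have "\<dots> = image_mset (nth P) (mset_set {..<length P})"
    unfolding multiset.map_comp by (rule image_mset_cong) (use e in auto)
  finally show ?thesis by (simp add: mset_nth_conv)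
qed

lemma Ef_1_exact: "1 \<le> n \<Longrightarrow> Ef n 1 N = 1 + N"
proof -
  assume n: "1 \<le> n"
  have "Ef n 1 N - 1 = (\<Sum>k\<in>{1..n}. of_int (int_binom 1 k) * N ^ k)" by (rule Ef_minus1)
  also have "\<dots> = (\<Sum>k\<in>{1}. of_int (int_binom 1 k) * N ^ k)"
    by (rule sum.mono_neutral_right) (use n in \<open>auto simp: ib_one\<close>)
  finally have "Ef n 1 N - 1 = N" by (simp add: ib_one)
  then show ?thesis by (metis add.commute diff_add_cancel)
qed

lemma prod_mset_xv: "prod_mset (image_mset xv M) = frag_of M"
  by (induction M) (auto simp: xv_def frag_of_mult add.commute)

lemma psig_pure:
  assumes "\<forall>p\<in>set R. plab p = 1" and "1 \<le> n"
  shows "psig n R = frag_of (mset (pm R))"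
proof -
  have "image_mset (phi n) (mset R) = image_mset (xv \<circ> pe) (mset R)"
    by (rule image_mset_cong) (use assms in \<open>auto simp: phi_def Ef_1_exact\<close>)
  moreover have "mset (pm R) = image_mset pe (mset R)"
  proof -
    have "(\<lambda>(x::'a, l::int, y::'a). (x, y)) = pe" by (auto simp: pe_def psrc_def ptgt_def)
    then show ?thesis by (simp add: pm_def mset_map)
  qed
  ultimately show ?thesis
    by (simp add: psig_list prod_mset_xv flip: multiset.map_comp)
qed

lemma set_maze_I: "p \<in> set (maze_I P d) \<Longrightarrow> plab p = 1"
  by (auto simp: maze_I_def plab_def)

lemma Psi_rel: "r \<in> laby_rel n \<Longrightarrow> Psi n r \<in> Zs n"
proof -
  assume r: "r \<in> laby_rel n"
  have Pof: "Psi n (frag_of P) = psig n P" for P by (simp add: Psi_def)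
  show ?thesis using r unfolding laby_rel_def
  proof (elim UnE CollectE exE conjE)
    fix P P' assume "r = frag_of P - frag_of P'" "maze_perm P P'"
    then show ?thesis by (simp add: Psi_def frag_extend_diff psig_list maze_perm_mset)
  next
    fix P x y assume "r = frag_of (P @ [(x, 0, y)])"
    then show ?thesis by (simp add: Pof psig_list phi_def plab_def)
  next
    fix P x y a b
    assume rr: "r = frag_of (P @ [(x, a + b, y)]) - frag_of (P @ [(x, a, y)]) - frag_of (P @ [(x, b, y)]) -
        frag_of (P @ [(x, a, y), (x, b, y)])"
    define c where "c = prod_mset (image_mset (phi n) (mset P))"
    define X where "X = xv (x, y)"
    have "Psi n r = psig n (P @ [(x, a + b, y)]) - psig n (P @ [(x, a, y)]) - psig n (P @ [(x, b, y)])
        - psig n (P @ [(x, a, y), (x, b, y)])"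
      unfolding rr Psi_def by (simp only: frag_extend_diff frag_extend_of)
    also have "\<dots> = c * ((Ef n (a + b) X - 1) - (Ef n a X - 1) - (Ef n b X - 1) - (Ef n a X - 1) * (Ef n b X - 1))"
      by (simp add: psig_list c_def X_def phi_def plab_def pe_def psrc_def ptgt_def algebra_simps)
    also have "\<dots> = c * (Ef n (a + b) X - Ef n a X * Ef n b X)"
      by (simp add: algebra_simps)
    finally have "Psi n r = c * (Ef n (a + b) X - Ef n a X * Ef n b X)" .
    moreover have "Ef n (a + b) X - Ef n a X * Ef n b X \<in> Zs n"
      using Ef_add[OF xv_Dg1[of "(x,y)"], of n a b] by (simp add: eqv_def X_def)
    ultimately show ?thesis by (simp add: Zs_def Dg_mult_left)
  next
    fix P assume rr: "r = frag_of P" and l: "n < length P"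
    have "psig n P \<in> Dg (1 * card {..<length P})"
      unfolding psig_prod by (rule Dg_prod) (auto simp: Ef_Dg1[OF xv_Dg1, simplified])
    then show ?thesis using l rr by (simp add: Pof Zs_def Dg_mono)
  next
    fix P assume rr: "r = frag_of P - (\<Sum>d\<in>mult_vectors n P.
          frag_cmul (\<Prod>i<length P. int_binom (plab (P!i)) (d!i)) (frag_of (maze_I P d)))"
    have "Psi n r = psig n P - (\<Sum>d\<in>mult_vectors n P. frag_cmul (coef P d) (psig n (maze_I P d)))"
      unfolding rr by (simp add: Psi_def frag_extend_diff frag_extend_sum mv_finite frag_extend_cmul coef_def o_def)
    also have "(\<Sum>d\<in>mult_vectors n P. frag_cmul (coef P d) (psig n (maze_I P d)))
        = (\<Sum>d\<in>mult_vectors n P. frag_cmul (coef P d) (frag_of (mset (pm (maze_I P d)))))"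
    proof (intro sum.cong refl)
      fix d assume d: "d \<in> mult_vectors n P"
      show "frag_cmul (coef P d) (psig n (maze_I P d)) = frag_cmul (coef P d) (frag_of (mset (pm (maze_I P d))))"
      proof (cases "1 \<le> n")
        case True
        then show ?thesis by (simp add: psig_pure set_maze_I)
      next
        case False
        then have "P = []" using d by (cases P) (auto simp: mult_vectors_def)
        then have "d = []" using d by (simp add: mult_vectors_def)
        then show ?thesis using \<open>P = []\<close> by (simp add: maze_I_def psig_list pm_def)
      qed
    qed
    finally show ?thesis by (simp add: psig_def)
  qed
qed

lemma Psi_ideal: "x \<in> laby_ideal n \<Longrightarrow> Psi n x \<in> Zs n"
  unfolding laby_ideal_def
proof (induction rule: gen_ideal.induct)
  case (gen_base r) then show ?case by (rule Psi_rel)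
next
  case gen_zero then show ?case by (simp add: Psi_def)
next
  case (gen_diff a b) then show ?case by (simp add: Psi_def frag_extend_diff Zs_diff)
next
  case (gen_left a g) then show ?case by (intro Psi_left) simp
next
  case (gen_right a g) then show ?case by (intro Psi_right) simp
qed

lemma gi_add: "a \<in> gen_ideal c R \<Longrightarrow> b \<in> gen_ideal c R \<Longrightarrow> a + b \<in> gen_ideal c R"
  using gen_diff[of a c R "0 - b"] gen_diff[OF gen_zero, of b c R] by simp

lemma gi_cmul: "a \<in> gen_ideal c R \<Longrightarrow> frag_cmul k a \<in> gen_ideal c R"
  by (rule frag_closure_minus_cmul[where P="\<lambda>x. x \<in> gen_ideal c R"]) (auto intro: gen_zero gen_diff)

lemma gi_sum: "(\<And>i. i \<in> I \<Longrightarrow> f i \<in> gen_ideal c R) \<Longrightarrow> sum f I \<in> gen_ideal c R"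
  by (induction I rule: infinite_finite_induct) (auto intro: gen_zero gi_add)

lemma gi_extend: "(\<And>q. q \<in> Poly_Mapping.keys x \<Longrightarrow> f q \<in> gen_ideal c R) \<Longrightarrow> frag_extend f x \<in> gen_ideal c R"
  unfolding frag_extend_def by (intro gi_sum gi_cmul) auto

lemma frag_extend_fdiff: "frag_extend (\<lambda>x. f x - g x) y = frag_extend f y - frag_extend g y"
  using subset_UNIV
  by (induction y rule: frag_induction) (auto simp: frag_extend_diff)

abbreviation cm :: "'a corr \<Rightarrow> 'a maze" where "cm \<equiv> corr_to_maze"

lemma Phi_of [simp]: "Phi (frag_of c) = frag_of (cm c)" by (simp add: Phi_def)
lemma Phi_diff: "Phi (a - b) = Phi a - Phi b" by (simp add: Phi_def frag_extend_diff)
lemma Phi_0 [simp]: "Phi 0 = 0" by (simp add: Phi_def)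

lemma length_cm [simp]: "length (cm c) = length c" by (simp add: corr_to_maze_def)
lemma nth_cm: "i < length c \<Longrightarrow> cm c ! i = (fst (c!i), 1, snd (c!i))"
  by (simp add: corr_to_maze_def case_prod_beta)

lemma Phi_gen: "Phi (sur_comp_gen v u) = laby_comp_gen (cm v) (cm u)"
proof -
  have wp: "weak_pullbacks v u = maze_pairings (cm v) (cm u)"
    by (auto simp: weak_pullbacks_def maze_pairings_def nth_cm psrc_def ptgt_def)
  have "Phi (sur_comp_gen v u) = (\<Sum>W\<in>weak_pullbacks v u.
      frag_of (cm (map (\<lambda>(i,j). (fst (u!j), snd (v!i))) (sorted_list_of_set W))))"
    unfolding sur_comp_gen_def Phi_def by (simp add: frag_extend_sum wp_wpS wpS_finite o_def)
  also have "\<dots> = laby_comp_gen (cm v) (cm u)"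
    unfolding laby_comp_gen_def wp[symmetric]
  proof (intro sum.cong refl arg_cong[where f=frag_of])
    fix W assume W: "W \<in> weak_pullbacks v u"
    have "\<forall>w\<in>set (sorted_list_of_set W). fst w < length v \<and> snd w < length u"
    proof
      fix w assume "w \<in> set (sorted_list_of_set W)"
      moreover have "finite W"
        by (rule finite_subset[of _ "{..<length v} \<times> {..<length u}"]) (use W in \<open>auto simp: weak_pullbacks_def\<close>)
      ultimately have "w \<in> W" by simp
      then show "fst w < length v \<and> snd w < length u" using W by (auto simp: weak_pullbacks_def)
    qed
    then show "cm (map (\<lambda>(i,j). (fst (u!j), snd (v!i))) (sorted_list_of_set W)) =
        map (\<lambda>(i,j). (psrc (cm u ! j), plab (cm v ! i) * plab (cm u ! j), ptgt (cm v ! i))) (sorted_list_of_set W)"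
      by (auto simp: corr_to_maze_def nth_cm psrc_def ptgt_def plab_def case_prod_beta intro!: map_cong)
  qed
  finally show ?thesis .
qed

lemma Phi_comp: "Phi (sur_comp a b) = laby_comp (Phi a) (Phi b)"
proof -
  have "Phi (sur_comp a b) = frag_extend (\<lambda>p. frag_extend (\<lambda>q. laby_comp_gen (cm p) (cm q)) b) a"
    unfolding sur_comp_def bilin_def Phi_def
    by (simp add: frag_extend_frag_extend Phi_gen[unfolded Phi_def])
  also have "\<dots> = laby_comp (Phi a) (Phi b)"
    unfolding laby_comp_def bilin_def Phi_def
    by (simp add: frag_extend_compose[unfolded o_def])
  finally show ?thesis .
qed

lemma Phi_forward: "a \<in> sur_ideal n \<Longrightarrow> Phi a \<in> laby_ideal n"
  unfolding sur_ideal_def laby_ideal_def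
proof (induction rule: gen_ideal.induct)
  case (gen_base r)
  then show ?case unfolding sur_rel_def
  proof (elim UnE CollectE exE conjE)
    fix c c' assume r: "r = frag_of c - frag_of c'" and iso: "corr_iso c c'"
    obtain \<pi> where l: "length c = length c'" and b: "bij_betw \<pi> {..<length c} {..<length c'}"
      and e: "\<forall>i<length c. c' ! (\<pi> i) = c ! i" using iso unfolding corr_iso_def by blast
    have "\<forall>i<length (cm c). cm c' ! (\<pi> i) = cm c ! i"
    proof (intro allI impI)
      fix i assume i: "i < length (cm c)"
      then have "\<pi> i < length c'" using b by (auto simp: bij_betw_def)
      then show "cm c' ! (\<pi> i) = cm c ! i" using e i by (simp add: nth_cm)
    qed
    then have "maze_perm (cm c) (cm c')"
      unfolding maze_perm_def using l b by auto
    then have "Phi r \<in> laby_rel n" unfolding r laby_rel_def by (auto simp: Phi_diff)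
    then show ?thesis by (rule gen_ideal.gen_base)
  next
    fix c assume r: "r = frag_of c" and l: "n < length c"
    then have "Phi r \<in> laby_rel n" unfolding laby_rel_def by auto
    then show ?thesis by (rule gen_ideal.gen_base)
  qed
next
  case gen_zero then show ?case by (simp add: gen_ideal.gen_zero)
next
  case (gen_diff a b) then show ?case by (simp add: Phi_diff gen_ideal.gen_diff)
next
  case (gen_left a g) then show ?case
    by (simp add: Phi_comp gen_ideal.gen_left)
next
  case (gen_right a g) then show ?case
    by (simp add: Phi_comp gen_ideal.gen_right)
qed

lemma psig_cm: "eqv n (psig n (cm c)) (frag_of (mset c))"
proof (cases "1 \<le> n")
  case True
  have "pm (cm c) = c" by (induction c) (auto simp: pm_def corr_to_maze_def)
  moreover have "\<forall>p\<in>set (cm c). plab p = 1" by (auto simp: corr_to_maze_def plab_def)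
  ultimately have "psig n (cm c) = frag_of (mset c)" using psig_pure[OF _ True, of "cm c"] by simp
  then show ?thesis by simp
next
  case False
  then have n: "n = 0" by simp
  show ?thesis
  proof (cases c)
    case Nil then show ?thesis by (simp add: psig_list corr_to_maze_def)
  next
    case (Cons x c')
    have "psig n (cm c) = 0"
      by (simp add: psig_list Cons corr_to_maze_def phi_def Ef_def n case_prod_beta)
    moreover have "frag_of (mset c) \<in> Zs n" by (simp add: Zs_def Dg_def Cons n)
    ultimately show ?thesis by (simp add: eqv_def Zs_def Dg_uminus)
  qed
qed

lemma Psi_Phi: "eqv n (Psi n (Phi a)) (Cls a)"
proof -
  have "Psi n (Phi a) = frag_extend (\<lambda>c. psig n (cm c)) a"
    unfolding Psi_def Phi_def by (simp add: frag_extend_compose[unfolded o_def])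
  then show ?thesis unfolding Cls_def by (simp add: frag_extend_eqv psig_cm)
qed

lemma Cls_backward: "Cls a \<in> Zs n \<Longrightarrow> a \<in> sur_ideal n"
proof -
  assume Z: "Cls a \<in> Zs n"
  have iso: "frag_of c - frag_of (lst (mset c)) \<in> sur_ideal n" for c :: "'a corr"
  proof -
    have "mset c = mset (lst (mset c))" by simp
    then obtain f where f: "bij_betw f {..<length c} {..<length (lst (mset c))}"
        "\<forall>i<length c. c!i = lst (mset c) ! (f i)"
      using permutation_Ex_bij by blast
    have "corr_iso c (lst (mset c))"
      unfolding corr_iso_def using f by (auto dest: bij_betw_same_card)
    then show ?thesis unfolding sur_ideal_def sur_rel_def by (intro gen_base) blast
  qed
  have "a - frag_extend (\<lambda>c. frag_of (lst (mset c))) a \<in> sur_ideal n"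
  proof -
    have "a - frag_extend (\<lambda>c. frag_of (lst (mset c))) a = frag_extend (\<lambda>c. frag_of c - frag_of (lst (mset c))) a"
      using frag_extend_fdiff[of frag_of "\<lambda>c. frag_of (lst (mset c))" a] frag_expansion[of a] by simp
    then show ?thesis unfolding sur_ideal_def using iso unfolding sur_ideal_def by (simp add: gi_extend)
  qed
  moreover have "frag_extend (\<lambda>c. frag_of (lst (mset c))) a \<in> sur_ideal n"
  proof -
    have "frag_extend (\<lambda>c. frag_of (lst (mset c))) a = frag_extend (\<lambda>M. frag_of (lst M)) (Cls a)"
      unfolding Cls_def by (simp add: frag_extend_compose[unfolded o_def])
    also have "\<dots> \<in> sur_ideal n"
      unfolding sur_ideal_def
    proof (rule gi_extend)
      fix M assume "M \<in> Poly_Mapping.keys (Cls a)"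
      then have "n < size M" using Z by (auto simp: Zs_def Dg_def)
      then have "n < length (lst M)" by (metis mset_lst size_mset)
      then show "frag_of (lst M) \<in> gen_ideal sur_comp (sur_rel n)"
        by (intro gen_base) (auto simp: sur_rel_def)
    qed
    finally show ?thesis .
  qed
  ultimately show ?thesis unfolding sur_ideal_def using gi_add by fastforce
qed

lemma cm_pm: "\<forall>p\<in>set R. plab p = 1 \<Longrightarrow> cm (pm R) = R"
  by (induction R) (auto simp: pm_def corr_to_maze_def plab_def)

lemma set_pm_maze_I:
  assumes d: "d \<in> mult_vectors n P"
  shows "set (pm (maze_I P d)) = pe ` set P"
proof -
  have l: "length d = length P" and pos: "\<forall>i<length P. 1 \<le> d!i"
    using d by (auto simp: mult_vectors_def) (metis atLeastAtMost_iff nth_mem subsetD)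
  have "set (pm (maze_I P d)) = set_mset (mset (pm (maze_I P d)))" by simp
  also have "\<dots> = (\<Union>i<length P. set_mset (replicate_mset (d!i) (pe (P!i))))"
    by (simp add: mset_pm_maze_I[OF l] set_mset_sum)
  also have "\<dots> = (\<Union>i<length P. {pe (P!i)})"
    using pos by (intro SUP_cong refl) (auto simp: set_mset_replicate_mset_subset)
  also have "\<dots> = pe ` set P" unfolding set_conv_nth by blast
  finally show ?thesis .
qed

theorem mainTheorem16:
  fixes n :: nat
  shows
    "(\<forall>(X::'a set) Y. \<forall>a\<in>surHom X Y.
        Phi a \<in> labyHom X Y \<and> (a \<in> sur_ideal n \<longleftrightarrow> Phi a \<in> laby_ideal n))
   \<and> (\<forall>(X::'a set) Y. \<forall>b\<in>labyHom X Y. \<exists>a\<in>surHom X Y. b - Phi a \<in> laby_ideal n)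
   \<and> (\<forall>(X::'a set) Y Z a b. a \<in> surHom Y Z \<longrightarrow> b \<in> surHom X Y \<longrightarrow>
        Phi (sur_comp a b) - laby_comp (Phi a) (Phi b) \<in> laby_ideal n)
   \<and> (\<forall>X::'a set. finite X \<longrightarrow> Phi (sur_id X) - laby_id X \<in> laby_ideal n)"
proof (intro conjI allI ballI impI)
  fix X Y :: "'a set" and a assume a: "a \<in> surHom X Y"
  show "Phi a \<in> labyHom X Y"
    unfolding labyHom_def
  proof
    show "\<forall>P\<in>Poly_Mapping.keys (Phi a). maze_src P = X \<and> maze_tgt P = Y"
    proof
      fix P assume "P \<in> Poly_Mapping.keys (Phi a)"
      then obtain c where c: "c \<in> Poly_Mapping.keys a" "P = cm c"
        using keys_frag_extend[of "\<lambda>c. frag_of (cm c)" a] by (auto simp: Phi_def keys_frag_of)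
      have "fst ` set c = X" "snd ` set c = Y" using a c by (auto simp: surHom_def corr_src_def corr_tgt_def)
      moreover have "maze_src (cm c) = fst ` set c" "maze_tgt (cm c) = snd ` set c"
        by (simp_all add: maze_src_def maze_tgt_def corr_to_maze_def psrc_def ptgt_def image_image case_prod_beta)
      ultimately show "maze_src P = X \<and> maze_tgt P = Y" using c by simp
    qed
  qed
  show "a \<in> sur_ideal n \<longleftrightarrow> Phi a \<in> laby_ideal n"
  proof
    assume "a \<in> sur_ideal n" then show "Phi a \<in> laby_ideal n" by (rule Phi_forward)
  next
    assume "Phi a \<in> laby_ideal n"
    then have "Psi n (Phi a) \<in> Zs n" by (rule Psi_ideal)
    then have "Cls a \<in> Zs n" using Psi_Phi[of n a] eqv_sym eqv_Zs_trans by blast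
    then show "a \<in> sur_ideal n" by (rule Cls_backward)
  qed
next
  fix X Y :: "'a set" and b assume b: "b \<in> labyHom X Y"
  define h where "h P = (\<Sum>d\<in>mult_vectors n P. frag_cmul (coef P d) (frag_of (pm (maze_I P d))))" for P :: "'a maze"
  define a where "a = frag_extend h b"
  have "a \<in> surHom X Y"
    unfolding surHom_def
  proof
    show "\<forall>c\<in>Poly_Mapping.keys a. corr_src c = X \<and> corr_tgt c = Y"
    proof
      fix c assume "c \<in> Poly_Mapping.keys a"
      then obtain P where P: "P \<in> Poly_Mapping.keys b" "c \<in> Poly_Mapping.keys (h P)"
        using keys_frag_extend[of h b] by (auto simp: a_def)
      then obtain d where d: "d \<in> mult_vectors n P" "c = pm (maze_I P d)"
        using keys_sum[of "\<lambda>d. frag_cmul (coef P d) (frag_of (pm (maze_I P d)))" "mult_vectors n P"]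
        by (auto simp: h_def keys_frag_of)
      have "maze_src P = X" "maze_tgt P = Y" using b P by (auto simp: labyHom_def)
      then show "corr_src c = X \<and> corr_tgt c = Y"
        using set_pm_maze_I[OF d(1)] d(2)
        by (auto simp: corr_src_def corr_tgt_def maze_src_def maze_tgt_def pe_def image_image)
    qed
  qed
  moreover have "b - Phi a \<in> laby_ideal n"
  proof -
    have "Phi a = frag_extend (\<lambda>P. \<Sum>d\<in>mult_vectors n P. frag_cmul (coef P d) (frag_of (maze_I P d))) b"
      unfolding a_def Phi_def frag_extend_frag_extend h_def
      by (intro frag_extend_eq) (simp add: frag_extend_sum mv_finite frag_extend_cmul o_def cm_pm set_maze_I)
    then have "b - Phi a = frag_extend (\<lambda>P. frag_of P - (\<Sum>d\<in>mult_vectors n P. frag_cmul (coef P d) (frag_of (maze_I P d)))) b"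
      using frag_expansion[of b] frag_extend_fdiff[of frag_of _ b] by simp
    also have "\<dots> \<in> laby_ideal n"
      unfolding laby_ideal_def
      by (intro gi_extend gen_base) (auto simp: laby_rel_def coef_def)
    finally show ?thesis .
  qed
  ultimately show "\<exists>a\<in>surHom X Y. b - Phi a \<in> laby_ideal n" by blast
next
  fix X Y Z :: "'a set" and a b
  show "Phi (sur_comp a b) - laby_comp (Phi a) (Phi b) \<in> laby_ideal n"
    by (simp add: Phi_comp laby_ideal_def gen_zero)
next
  fix X :: "'a set"
  have "Phi (sur_id X) = laby_id X"
    by (simp add: sur_id_def laby_id_def corr_to_maze_def o_def)
  then show "Phi (sur_id X) - laby_id X \<in> laby_ideal n"
    by (simp add: laby_ideal_def gen_zero)
qed

end
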